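(* Let $a\in\mathbb{R}$, $N\ge1$, $\mathfrak D_{z,a}=(z-a)\partial_z^2-(2(z-a)^2+2)\partial_z-2(z-a)$ and $$\widehat G_N(z,w)=((z-a)(w-a))^3e^{-2(z+w)a}\sum_{k=0}^{N-1}\frac{q_{2k+1}^{(\mathrm{pre})}(z)q_{2k}^{(\mathrm{pre})}(w)}{r_k^{(\mathrm{pre})}}.$$ Then $$\frac{8e^{2wa}}{(z-a)^3(w-a)^3}\mathfrak D_{z,a}\widehat G_N(z,w)=\partial_z\Big[e^{-2za}\sum_{k=0}^{N-1}\frac{2^{2k+5}q_{2k}^{(\mathrm{pre})}(w)}{(2k+2)!f_{k+1}(a^2)}\Big(4f_k(a^2)\frac{(2k+2)!e_{2k+2}(2za)}{(2a)^{2k+3}}+(2k+2)f_{k+1}(a^2)z^{2k+1}-2f_k(a^2)z^{2k+3}\Big)\Big]$$ and $$\frac{8e^{2wa}}{(z-a)^3(w-a)^3}\mathfrak D_{z,a}\widehat G_N(w,z)=\partial_z\Big[e^{-2za}\sum_{k=0}^{N-1}\frac{2^{2k+4}q_{2k+1}^{(\mathrm{pre})}(w)}{(2k+2)!f_{k+1}(a^2)}\Big(8\frac{(2k+2)!\,a\,e_{k+1}(a^2)}{(2a)^{2k+3}}e_{2k+2}(2za)-4f_{k+1}(a^2)z^{2k+2}\Big)\Big].$$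
   Context: $e_k(x)=\sum_{j=0}^kx^j/j!$, $f_k(x)=(k+1)e_k(x)-xe_{k-1}(x)$ (with $e_{-1}\equiv0$). The polynomials are $q_{2k}^{(\mathrm{pre})}(z)=\sum_{j=0}^{2k}\alpha_{2k,j}z^j$, $q_{2k+1}^{(\mathrm{pre})}(z)=\sum_{j=0}^{2k+1}\beta_{2k+1,j}z^j$ with, writing $c_{j,k}=\frac{2^jf_j(a^2)}{2^kf_k(a^2)}$: $\alpha_{2k,2j}=c_{j,k}\big[\sum_{\ell=j}^k(\ell+1-j)\frac{(2k+3)!!}{(2\ell+3)!!}(2a^2)^{\ell-j}-\sum_{\ell=j}^k(\ell-j)\frac{(2k+1)!!}{(2\ell+1)!!}(2a^2)^{\ell-j}\big]$ ($0\le j\le k$); $\alpha_{2k,2j+1}=2a\,c_{j,k}\big[\sum_{\ell=j}^{k-1}(\ell+1-j)\frac{(2k+3)!!}{(2\ell+5)!!}(2a^2)^{\ell-j}-\sum_{\ell=j}^{k-1}(\ell-j)\frac{(2k+1)!!}{(2\ell+3)!!}(2a^2)^{\ell-j}\big]$ ($0\le j\le k-1$); $\beta_{2k+1,2j}=a\,c_{j,k}\big[\frac{2j+1}{2k+3}(2a^2)^{k-j}+2\sum_{\ell=j}^k(\ell+1-j)\frac{(2k+1)!!}{(2\ell+3)!!}(2a^2)^{\ell-j}\big]$; $\beta_{2k+1,2j+1}=c_{j,k}\big[\frac{2j+3}{2k+3}(2a^2)^{k-j}+2\sum_{\ell=j}^k(\ell-j)\frac{(2k+1)!!}{(2\ell+3)!!}(2a^2)^{\ell-j}\big]$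 ($0\le j\le k$); and $r_k^{(\mathrm{pre})}=\frac{(2k+2)!}{2^{2k+2}}\frac{f_{k+1}(a^2)}{f_k(a^2)}$. *)

theory Defs
  imports "HOL-Analysis.Analysis"
begin

definition etrunc :: "nat \<Rightarrow> 'a::real_normed_field \<Rightarrow> 'a" where
  "etrunc k x = (\<Sum>j\<le>k. x ^ j / of_nat (fact j))"

definition ftrunc :: "nat \<Rightarrow> real \<Rightarrow> real" where
  "ftrunc k x = real (k + 1) * etrunc k x - (if k = 0 then 0 else x * etrunc (k - 1) x)"

fun dfact :: "nat \<Rightarrow> nat" where
  "dfact 0 = 1"
| "dfact (Suc 0) = 1"
| "dfact (Suc (Suc n)) = (n + 2) * dfact n"

definition cco :: "real \<Rightarrow> nat \<Rightarrow> nat \<Rightarrow> real" where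
  "cco a j k = (2 ^ j * ftrunc j (a^2)) / (2 ^ k * ftrunc k (a^2))"

definition alpha :: "real \<Rightarrow> nat \<Rightarrow> nat \<Rightarrow> real" where
  "alpha a k i =
    (if even i then
       (let j = i div 2 in
        cco a j k *
          ((\<Sum>l=j..k. real (l + 1 - j) * (real (dfact (2*k+3)) / real (dfact (2*l+3))) * (2*a^2) ^ (l - j))
         - (\<Sum>l=j..k. real (l - j) * (real (dfact (2*k+1)) / real (dfact (2*l+1))) * (2*a^2) ^ (l - j))))
     else
       (let j = i div 2 in
        2 * a * cco a j k *
          ((\<Sum>l=j..<k. real (l + 1 - j) * (real (dfact (2*k+3)) / real (dfact (2*l+5))) * (2*a^2) ^ (l - j))
         - (\<Sum>l=j..<k. real (l - j) * (real (dfact (2*k+1)) / real (dfact (2*l+3))) * (2*a^2) ^ (l - j)))))"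

definition beta :: "real \<Rightarrow> nat \<Rightarrow> nat \<Rightarrow> real" where
  "beta a k i =
    (if even i then
       (let j = i div 2 in
        a * cco a j k *
          (real (2*j+1) / real (2*k+3) * (2*a^2) ^ (k - j)
           + 2 * (\<Sum>l=j..k. real (l + 1 - j) * (real (dfact (2*k+1)) / real (dfact (2*l+3))) * (2*a^2) ^ (l - j))))
     else
       (let j = i div 2 in
        cco a j k *
          (real (2*j+3) / real (2*k+3) * (2*a^2) ^ (k - j)
           + 2 * (\<Sum>l=j..k. real (l - j) * (real (dfact (2*k+1)) / real (dfact (2*l+3))) * (2*a^2) ^ (l - j)))))"

definition qeven :: "real \<Rightarrow> nat \<Rightarrow> complex \<Rightarrow> complex" where
  "qeven a k z = (\<Sum>i\<le>2*k. of_real (alpha a k i) * z ^ i)"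

definition qodd :: "real \<Rightarrow> nat \<Rightarrow> complex \<Rightarrow> complex" where
  "qodd a k z = (\<Sum>i\<le>2*k+1. of_real (beta a k i) * z ^ i)"

definition rpre :: "real \<Rightarrow> nat \<Rightarrow> real" where
  "rpre a k = fact (2*k+2) / 2 ^ (2*k+2) * (ftrunc (k+1) (a^2) / ftrunc k (a^2))"

definition Ghat :: "real \<Rightarrow> nat \<Rightarrow> complex \<Rightarrow> complex \<Rightarrow> complex" where
  "Ghat a N z w = ((z - of_real a) * (w - of_real a)) ^ 3 * exp (- 2 * (z + w) * of_real a) *
     (\<Sum>k<N. qodd a k z * qeven a k w / of_real (rpre a k))"

definition Dop :: "real \<Rightarrow> (complex \<Rightarrow> complex) \<Rightarrow> complex \<Rightarrow> complex" where
  "Dop a g z = (z - of_real a) * deriv (deriv g) z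
              - (2 * (z - of_real a)^2 + 2) * deriv g z
              - 2 * (z - of_real a) * g z"

end

theory Submission
  imports Defs "HOL-Computational_Algebra.Polynomial"
begin

lemma dfact_pos: "dfact n > 0"
  by (induction n rule: dfact.induct) auto

definition D1 :: "nat \<Rightarrow> real" where "D1 l = real (dfact (2*l+1))"
definition D3 :: "nat \<Rightarrow> real" where "D3 l = real (dfact (2*l+3))"

lemma D1_pos: "D1 l > 0" unfolding D1_def using dfact_pos by simp
lemma D3_pos: "D3 l > 0" unfolding D3_def using dfact_pos by simp
lemma dfact_nz [simp]: "real (dfact n) \<noteq> 0" using dfact_pos[of n] by simp
lemma D1_nz [simp]: "D1 l \<noteq> 0" using D1_pos[of l] by simp
lemma D3_nz [simp]: "D3 l \<noteq> 0" using D3_pos[of l] by simp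

lemma D3_D1: "D3 l = (2*real l+3) * D1 l"
proof -
  have h: "2*l+3 = Suc (Suc (2*l+1))" by simp
  have "dfact (2*l+3) = dfact (Suc (Suc (2*l+1)))" by (rule arg_cong[OF h])
  also have "\<dots> = (2*l+1+2) * dfact (2*l+1)" by (rule dfact.simps(3))
  finally have "real (dfact (2*l+3)) = real (2*l+1+2) * real (dfact (2*l+1))" by (metis of_nat_mult)
  moreover have "real (2*l+1+2) = 2*real l+3" by simp
  ultimately show ?thesis unfolding D1_def D3_def by simp
qed

lemma D1_Suc: "D1 (Suc l) = D3 l"
proof -
  have h: "2*Suc l+1 = 2*l+3" by simp
  show ?thesis unfolding D1_def D3_def h ..
qed

lemma D3_Suc: "D3 (Suc l) = (2*real l+5) * D3 l"
  using D3_D1[of "Suc l"] D1_Suc[of l] by simp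

definition sig :: "real \<Rightarrow> nat \<Rightarrow> nat \<Rightarrow> real" where
  "sig t j k = (\<Sum>l=j..k. t^(l-j) / D3 l)"
definition om :: "real \<Rightarrow> nat \<Rightarrow> nat \<Rightarrow> real" where
  "om t j k = (\<Sum>l=j..k. real (l-j) * t^(l-j) / D3 l)"

lemma sig_Suc: "j \<le> Suc k \<Longrightarrow> sig t j (Suc k) = sig t j k + t^(Suc k - j) / D3 (Suc k)"
  by (simp add: sig_def)
lemma om_Suc: "j \<le> Suc k \<Longrightarrow> om t j (Suc k) = om t j k + real (Suc k - j) * t^(Suc k - j) / D3 (Suc k)"
  by (simp add: om_def)

lemma om_closed:
  assumes "j \<le> k"
  shows "2 * om t j k = (t - (2*real j+3)) * sig t j k + 1 / D1 j - t^(k+1-j) / D3 k"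
  using assms
proof (induction k rule: dec_induct)
  case base
  have h: "(2*real j+3)/D3 j = 1/D1 j" using D3_D1[of j] D1_pos[of j] D3_pos[of j] by (simp add: field_simps)
  have "(t - (2*real j+3)) / D3 j + 1 / D1 j - t / D3 j = 0"
    unfolding diff_divide_distrib h by simp
  then show ?case by (simp add: om_def sig_def)
next
  case (step k)
  define T where "T = t^(Suc k - j)"
  define d3 where "d3 = D3 k"
  have p1: "d3 > 0" using D3_pos by (simp add: d3_def)
  have e2: "k + 1 - j = Suc k - j" using step by simp
  have e3: "t^(Suc k + 1 - j) = t * T" using step by (simp add: T_def Suc_diff_le)
  have e4: "real (Suc k - j) = real k + 1 - real j" using step by (simp add: of_nat_diff)
  define d5 where "d5 = (2*real k+5) * d3"
  have p5: "d5 > 0" using p1 by (simp add: d5_def)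
  have "2 * om t j (Suc k) = ((t - (2*real j+3)) * sig t j k + 1 / D1 j - T / d3)
       + 2 * ((real k + 1 - real j) * T / d5)"
    using step by (simp only: om_Suc e2 e4 D3_Suc T_def d3_def d5_def distrib_left)
  also have "\<dots> = (t - (2*real j+3)) * (sig t j k + T / d5) + 1 / D1 j
          - t * T / d5"
  proof -
    have h: "T / d3 = (2*real k+5) * T / d5" using p1 by (simp add: d5_def)
    show ?thesis unfolding h using p5 by (simp add: field_simps)
  qed
  also have "\<dots> = (t - (2*real j+3)) * sig t j (Suc k) + 1 / D1 j
          - t^(Suc k+1-j) / D3 (Suc k)"
    using step by (simp only: sig_Suc e3 D3_Suc T_def d3_def d5_def)
  finally show ?case .
qed

definition rho :: "real \<Rightarrow> nat \<Rightarrow> nat \<Rightarrow> real" where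
  "rho t j k = (\<Sum>l=j..k. real (l-j) * t^(l-j) / D1 l)"
definition tau :: "real \<Rightarrow> nat \<Rightarrow> nat \<Rightarrow> real" where
  "tau t j k = (\<Sum>l=j..<k. real (l+1-j) * t^(l-j) / D3 (Suc l))"

lemma rho_closed:
  assumes "j \<le> k"
  shows "rho t j k = t * (om t j k + sig t j k) - real (k+1-j) * t^(k+1-j) / D3 k"
  using assms
proof (induction k rule: dec_induct)
  case base
  then show ?case by (simp add: rho_def om_def sig_def)
next
  case (step k)
  define T where "T = t^(Suc k - j)"
  have p1: "D3 k > 0" "D3 (Suc k) > 0" using D3_pos by auto
  have e2: "k + 1 - j = Suc k - j" using step by simp
  have e3: "t^(Suc k + 1 - j) = t * T" using step by (simp add: T_def Suc_diff_le)
  have e4: "real (Suc k - j) = real k + 1 - real j" using step by (simp add: of_nat_diff)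
  have e5: "real (Suc k + 1 - j) = real k + 2 - real j" using step by (simp add: of_nat_diff)
  have "rho t j (Suc k) = rho t j k + (real k + 1 - real j) * T / D3 k"
    using step by (simp add: rho_def D1_Suc T_def e4)
  also have "\<dots> = t * (om t j k + sig t j k) - (real k + 1 - real j) * T / D3 k + (real k + 1 - real j) * T / D3 k"
    using step by (simp only: e2 e4 T_def)
  also have "\<dots> = t * (om t j k + (real k + 1 - real j) * T / D3 (Suc k) + (sig t j k + T / D3 (Suc k)))
       - (real k + 2 - real j) * (t * T) / D3 (Suc k)"
    using p1 by (simp add: field_simps)
  also have "\<dots> = t * (om t j (Suc k) + sig t j (Suc k)) - real (Suc k+1-j) * t^(Suc k+1-j) / D3 (Suc k)"
    using step by (simp only: om_Suc sig_Suc e3 e4 e5 T_def)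
  finally show ?case .
qed

lemma tau_closed:
  assumes "j \<le> k"
  shows "t * tau t j k = om t j k"
  using assms
proof (induction k rule: dec_induct)
  case base
  then show ?case by (simp add: tau_def om_def)
next
  case (step k)
  have e1: "t * t^(k-j) = t^(Suc k - j)" using step by (simp add: Suc_diff_le)
  have e4: "real (k+1-j) = real (Suc k - j)" using step by simp
  have "t * tau t j (Suc k) = t * tau t j k + real (k+1-j) * (t * t^(k-j)) / D3 (Suc k)"
    using step by (simp add: tau_def algebra_simps)
  also have "\<dots> = om t j (Suc k)"
    using step by (simp only: om_Suc e1 e4)
  finally show ?case .
qed

lemma sig_shift:
  assumes "j \<le> k"
  shows "sig t j k = 1 / D3 j + t * sig t (Suc j) k"
proof -
  have "sig t j k = t^(j-j) / D3 j + (\<Sum>l=Suc j..k. t^(l-j) / D3 l)"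
    unfolding sig_def using assms by (simp add: sum.atLeast_Suc_atMost)
  also have "(\<Sum>l=Suc j..k. t^(l-j) / D3 l) = (\<Sum>l=Suc j..k. t * (t^(l - Suc j) / D3 l))"
  proof (rule sum.cong)
    fix l assume "l \<in> {Suc j..k}"
    then have "l - j = Suc (l - Suc j)" by auto
    then show "t^(l-j) / D3 l = t * (t^(l - Suc j) / D3 l)" by simp
  qed simp
  finally show ?thesis by (simp add: sig_def sum_distrib_left)
qed

lemma dfact5: "real (dfact (2*l+5)) = D3 (Suc l)"
proof -
  have h: "2*Suc l+3 = 2*l+5" by simp
  show ?thesis unfolding D3_def h ..
qed

definition SS :: "real \<Rightarrow> nat \<Rightarrow> nat \<Rightarrow> real" where "SS a k j = D1 k * sig (2*a^2) j k"
definition DD :: "nat \<Rightarrow> nat \<Rightarrow> real" where "DD k j = D1 k / D3 j"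
definition PP :: "real \<Rightarrow> nat \<Rightarrow> nat \<Rightarrow> real" where "PP a k j = (2*a^2)^(k-j)"

definition WW :: "real \<Rightarrow> nat \<Rightarrow> nat \<Rightarrow> real \<Rightarrow> real \<Rightarrow> real \<Rightarrow> real" where
  "WW a k j S D P = ((2*a^2 - (2*real j+3))*S + (2*real j+3)*D - 2*a^2*P/(2*real k+3))/2"
definition Bov :: "real \<Rightarrow> nat \<Rightarrow> nat \<Rightarrow> real \<Rightarrow> real \<Rightarrow> real \<Rightarrow> real" where
  "Bov a k j S D P = (2*real j+3)/(2*real k+3)*P + 2*WW a k j S D P"
definition Bev :: "real \<Rightarrow> nat \<Rightarrow> nat \<Rightarrow> real \<Rightarrow> real \<Rightarrow> real \<Rightarrow> real" where
  "Bev a k j S D P = (2*real j+1)/(2*real k+3)*P + 2*(WW a k j S D P + S)"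
definition Aev :: "real \<Rightarrow> nat \<Rightarrow> nat \<Rightarrow> real \<Rightarrow> real \<Rightarrow> real \<Rightarrow> real" where
  "Aev a k j S D P = (2*real k+3)*(WW a k j S D P + S)
     - (2*a^2*(WW a k j S D P + S) - (real k + 1 - real j)*(2*a^2)*P/(2*real k+3))"
definition Aov :: "real \<Rightarrow> nat \<Rightarrow> nat \<Rightarrow> real \<Rightarrow> real \<Rightarrow> real \<Rightarrow> real" where
  "Aov a k j S D P = (2*real k+3)*WW a k j S D P/(2*a^2) - (WW a k j S D P - (real k - real j)*P/(2*real k+3))"

lemma D1D3k: "D1 k / D3 k = 1 / (2*real k+3)"
proof -
  have "D1 k / D3 k = D1 k / ((2*real k+3)*D1 k)" by (simp only: D3_D1)
  also have "\<dots> = 1 / (2*real k+3)" by simp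
  finally show ?thesis .
qed

lemma WW_eq:
  assumes "j \<le> k"
  shows "D1 k * om (2*a^2) j k = WW a k j (SS a k j) (DD k j) (PP a k j)"
proof -
  define t where "t = 2*a^2"
  have h0: "2*real j+3 \<noteq> 0" by (simp add: add_nonneg_pos)
  have h1: "D1 k / D1 j = (2*real j+3) * (D1 k / D3 j)"
    unfolding D3_D1[of j] using h0 by simp
  have h2: "t^(k+1-j) = t * t^(k-j)" using assms by (simp add: Suc_diff_le)
  have e: "2 * om t j k = (t - (2*real j+3)) * sig t j k + 1/D1 j - t^(k+1-j)/D3 k"
    by (rule om_closed[OF assms])
  have "2 * (D1 k * om t j k) = D1 k * (2 * om t j k)" by simp
  also have "\<dots> = D1 k * ((t - (2*real j+3)) * sig t j k + 1/D1 j - t * t^(k-j)/D3 k)"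
    by (simp only: e h2)
  also have "\<dots> = (t - (2*real j+3)) * (D1 k * sig t j k) + D1 k / D1 j - t * t^(k-j) * (D1 k / D3 k)"
    by (simp add: algebra_simps)
  also have "\<dots> = (t - (2*real j+3)) * (D1 k * sig t j k) + (2*real j+3) * (D1 k / D3 j) - t * t^(k-j) / (2*real k+3)"
    unfolding h1 D1D3k by simp
  finally have f: "2 * (D1 k * om t j k) = (t - (2*real j+3)) * (D1 k * sig t j k) + (2*real j+3) * (D1 k / D3 j) - t * t^(k-j) / (2*real k+3)" .
  have "WW a k j (SS a k j) (DD k j) (PP a k j) = ((t - (2*real j+3)) * (D1 k * sig t j k) + (2*real j+3) * (D1 k / D3 j) - t * t^(k-j) / (2*real k+3)) / 2"
    unfolding WW_def SS_def DD_def PP_def t_def by simp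
  with f show ?thesis unfolding t_def by argo
qed

lemma sumB2:
  "(\<Sum>l=j..k. real (l - j) * (real (dfact (2*k+1)) / real (dfact (2*l+3))) * t ^ (l - j))
   = D1 k * om t j k"
  unfolding om_def sum_distrib_left D1_def D3_def by (rule sum.cong) auto

lemma sumB1:
  "(\<Sum>l=j..k. real (l + 1 - j) * (real (dfact (2*k+1)) / real (dfact (2*l+3))) * t ^ (l - j))
   = D1 k * om t j k + D1 k * sig t j k"
  unfolding om_def sig_def sum_distrib_left D1_def D3_def sum.distrib[symmetric]
proof (rule sum.cong)
  fix l assume "l \<in> {j..k}"
  then have "real (l + 1 - j) = real (l - j) + 1" by (simp add: of_nat_diff)
  then show "real (l + 1 - j) * (real (dfact (2*k+1)) / real (dfact (2*l+3))) * t ^ (l - j)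
    = real (dfact (2*k+1)) * (real (l - j) * t ^ (l - j) / real (dfact (2*l+3))) + real (dfact (2*k+1)) * (t ^ (l - j) / real (dfact (2*l+3)))"
    by (simp add: divide_simps) (simp add: algebra_simps)
qed simp

lemma sumA1:
  "(\<Sum>l=j..k. real (l + 1 - j) * (real (dfact (2*k+3)) / real (dfact (2*l+3))) * t ^ (l - j))
   = D3 k * om t j k + D3 k * sig t j k"
  unfolding om_def sig_def sum_distrib_left D3_def sum.distrib[symmetric]
proof (rule sum.cong)
  fix l assume "l \<in> {j..k}"
  then have "real (l + 1 - j) = real (l - j) + 1" by (simp add: of_nat_diff)
  then show "real (l + 1 - j) * (real (dfact (2*k+3)) / real (dfact (2*l+3))) * t ^ (l - j)
    = real (dfact (2*k+3)) * (real (l - j) * t ^ (l - j) / real (dfact (2*l+3))) + real (dfact (2*k+3)) * (t ^ (l - j) / real (dfact (2*l+3)))"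
    by (simp add: divide_simps) (simp add: algebra_simps)
qed simp

lemma sumA2:
  "(\<Sum>l=j..k. real (l - j) * (real (dfact (2*k+1)) / real (dfact (2*l+1))) * t ^ (l - j))
   = D1 k * rho t j k"
  unfolding rho_def sum_distrib_left D1_def by (rule sum.cong) auto

lemma sumA3:
  "(\<Sum>l=j..<k. real (l + 1 - j) * (real (dfact (2*k+3)) / real (dfact (2*l+5))) * t ^ (l - j))
   = D3 k * tau t j k"
  unfolding tau_def sum_distrib_left dfact5 D3_def[of k, symmetric] by (rule sum.cong) auto

lemma sumA4:
  "(\<Sum>l=j..<k. real (l - j) * (real (dfact (2*k+1)) / real (dfact (2*l+3))) * t ^ (l - j))
   = D1 k * om t j k - D1 k * (real (k-j) * t^(k-j) / D3 k)"
proof -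
  have "(\<Sum>l=j..<k. real (l - j) * (real (dfact (2*k+1)) / real (dfact (2*l+3))) * t ^ (l - j))
      = D1 k * (\<Sum>l=j..<k. real (l-j) * t^(l-j) / D3 l)"
    unfolding sum_distrib_left D1_def D3_def by (rule sum.cong) auto
  moreover have "om t j k = (\<Sum>l=j..<k. real (l-j) * t^(l-j) / D3 l) + real (k-j) * t^(k-j) / D3 k"
  proof (cases "j \<le> k")
    case True
    then have "{j..k} = insert k {j..<k}" by auto
    then show ?thesis unfolding om_def by simp
  next
    case False
    then show ?thesis by (simp add: om_def)
  qed
  ultimately show ?thesis by (simp add: algebra_simps)
qed

lemma ev1: "\<not> even (2*j+1::nat)" by simp
lemma dv1: "(2*j+1::nat) div 2 = j" by simp
lemma ev0: "even (2*j::nat)" by simp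
lemma dv0: "(2*j::nat) div 2 = j" by simp

lemma beta_odd:
  assumes "j \<le> k"
  shows "beta a k (2*j+1) = cco a j k * Bov a k j (SS a k j) (DD k j) (PP a k j)"
proof -
  have "beta a k (2*j+1) = cco a j k * (real (2*j+3) / real (2*k+3) * (2*a^2)^(k-j) + 2 * (D1 k * om (2*a^2) j k))"
    unfolding beta_def Let_def by (simp only: ev1 dv1 if_False sumB2)
  also have "\<dots> = cco a j k * Bov a k j (SS a k j) (DD k j) (PP a k j)"
    unfolding WW_eq[OF assms] Bov_def PP_def by simp
  finally show ?thesis .
qed

lemma beta_even:
  assumes "j \<le> k"
  shows "beta a k (2*j) = a * cco a j k * Bev a k j (SS a k j) (DD k j) (PP a k j)"
proof -
  have "beta a k (2*j) = a * cco a j k * (real (2*j+1) / real (2*k+3) * (2*a^2)^(k-j) + 2 * (D1 k * om (2*a^2) j k + D1 k * sig (2*a^2) j k))"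
    unfolding beta_def Let_def by (simp only: ev0 dv0 if_True sumB1)
  also have "\<dots> = a * cco a j k * Bev a k j (SS a k j) (DD k j) (PP a k j)"
    unfolding WW_eq[OF assms] Bev_def PP_def SS_def by simp
  finally show ?thesis .
qed

lemma alpha_even:
  assumes "j \<le> k"
  shows "alpha a k (2*j) = cco a j k * Aev a k j (SS a k j) (DD k j) (PP a k j)"
proof -
  have "alpha a k (2*j) = cco a j k * ((D3 k * om (2*a^2) j k + D3 k * sig (2*a^2) j k) - D1 k * rho (2*a^2) j k)"
    unfolding alpha_def Let_def by (simp only: ev0 dv0 if_True sumA1 sumA2)
  also have "\<dots> = cco a j k * ((D3 k * om (2*a^2) j k + D3 k * sig (2*a^2) j k)
      - D1 k * ((2*a^2) * (om (2*a^2) j k + sig (2*a^2) j k) - real (k+1-j) * (2*a^2)^(k+1-j) / D3 k))"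
    unfolding rho_closed[OF assms] ..
  also have "\<dots> = cco a j k * Aev a k j (SS a k j) (DD k j) (PP a k j)"
  proof -
    have h1: "D3 k = (2*real k+3) * D1 k" by (rule D3_D1)
    have h2: "(2*a^2)^(k+1-j) = 2*a^2 * (2*a^2)^(k-j)" using assms by (simp add: Suc_diff_le)
    have h3: "real (k+1-j) = real k + 1 - real j" using assms by (simp add: of_nat_diff)
    have h4: "D1 k * (real k + 1 - real j) * (2*a^2 * (2*a^2)^(k-j)) / D3 k
       = (real k + 1 - real j) * (2*a^2) * (2*a^2)^(k-j) / (2*real k+3)"
    proof -
      have "D1 k * (real k + 1 - real j) * (2*a^2 * (2*a^2)^(k-j)) / D3 k
         = (real k + 1 - real j) * (2*a^2) * (2*a^2)^(k-j) * (D1 k / D3 k)" by simp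
      also have "\<dots> = (real k + 1 - real j) * (2*a^2) * (2*a^2)^(k-j) / (2*real k+3)"
        unfolding D1D3k by simp
      finally show ?thesis .
    qed
    have "D1 k * ((2*a^2) * (om (2*a^2) j k + sig (2*a^2) j k) - real (k+1-j) * (2*a^2)^(k+1-j) / D3 k)
       = 2*a^2 * (D1 k * om (2*a^2) j k + D1 k * sig (2*a^2) j k)
         - D1 k * (real k + 1 - real j) * (2*a^2 * (2*a^2)^(k-j)) / D3 k"
      unfolding h2 h3 by (simp add: algebra_simps)
    also have "\<dots> = 2*a^2 * (D1 k * om (2*a^2) j k + D1 k * sig (2*a^2) j k)
         - (real k + 1 - real j) * (2*a^2) * (2*a^2)^(k-j) / (2*real k+3)"
      unfolding h4 ..
    finally have e1: "D1 k * ((2*a^2) * (om (2*a^2) j k + sig (2*a^2) j k) - real (k+1-j) * (2*a^2)^(k+1-j) / D3 k)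
       = 2*a^2 * (D1 k * om (2*a^2) j k + D1 k * sig (2*a^2) j k)
         - (real k + 1 - real j) * (2*a^2) * (2*a^2)^(k-j) / (2*real k+3)" .
    have e2: "D3 k * om (2*a^2) j k + D3 k * sig (2*a^2) j k = (2*real k+3) * (D1 k * om (2*a^2) j k + D1 k * sig (2*a^2) j k)"
      unfolding h1 by (simp add: algebra_simps)
    show ?thesis unfolding e1 e2 WW_eq[OF assms] Aev_def SS_def PP_def by simp
  qed
  finally show ?thesis .
qed

lemma alpha_odd:
  assumes "j \<le> k" "a \<noteq> 0"
  shows "alpha a k (2*j+1) = 2 * a * cco a j k * Aov a k j (SS a k j) (DD k j) (PP a k j)"
proof -
  have "alpha a k (2*j+1) = 2 * a * cco a j k * (D3 k * tau (2*a^2) j k - (D1 k * om (2*a^2) j k - D1 k * (real (k-j) * (2*a^2)^(k-j) / D3 k)))"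
    unfolding alpha_def Let_def by (simp only: ev1 dv1 if_False sumA3 sumA4)
  also have "\<dots> = 2 * a * cco a j k * Aov a k j (SS a k j) (DD k j) (PP a k j)"
  proof -
    have t0: "2*a^2 \<noteq> 0" using assms by simp
    have h1: "tau (2*a^2) j k = om (2*a^2) j k / (2*a^2)"
      using tau_closed[OF assms(1), of "2*a^2"] t0 by (simp add: field_simps)
    have h2: "D3 k * tau (2*a^2) j k = (2*real k+3) * (D1 k * om (2*a^2) j k) / (2*a^2)"
      unfolding h1 D3_D1[of k] by simp
    have h3: "D1 k * (real (k-j) * (2*a^2)^(k-j) / D3 k) = (real k - real j) * (2*a^2)^(k-j) / (2*real k+3)"
    proof -
      have "D1 k * (real (k-j) * (2*a^2)^(k-j) / D3 k) = real (k-j) * (2*a^2)^(k-j) * (D1 k / D3 k)" by simp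
      also have "\<dots> = (real k - real j) * (2*a^2)^(k-j) / (2*real k+3)"
        unfolding D1D3k using assms by (simp add: of_nat_diff)
      finally show ?thesis .
    qed
    show ?thesis unfolding h2 h3 WW_eq[OF assms(1)] Aov_def PP_def by simp
  qed
  finally show ?thesis .
qed

lemma SS_shift: "j \<le> k \<Longrightarrow> SS a k j = DD k j + 2*a^2 * SS a k (Suc j)"
  unfolding SS_def DD_def using sig_shift[of j k "2*a^2"] by (simp add: algebra_simps)
lemma DD_shift: "DD k j = (2*real j+5) * DD k (Suc j)"
  unfolding DD_def D3_Suc by simp
lemma PP_shift: "j < k \<Longrightarrow> PP a k j = 2*a^2 * PP a k (Suc j)"
proof -
  assume "j < k"
  then have "k - j = Suc (k - Suc j)" by simp
  then show ?thesis unfolding PP_def by (simp only: power_Suc)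
qed
lemma SS_top: "SS a k k = 1/(2*real k+3)"
  unfolding SS_def sig_def using D1D3k[of k] by simp
lemma DD_top: "DD k k = 1/(2*real k+3)"
  unfolding DD_def using D1D3k[of k] by simp
lemma PP_top: "PP a k k = 1"
  unfolding PP_def by simp

lemma etrunc_Suc: "etrunc (Suc j) (x::real) = etrunc j x + x^(Suc j) / fact (Suc j)"
  unfolding etrunc_def sum.atMost_Suc of_nat_fact ..

lemma pow_fact_rec: "(real n + 1) * (x^(Suc n) / fact (Suc n)) = (x::real) * (x^n / fact n)"
proof -
  have f: "fact (Suc n) = (real n + 1) * fact n" by (simp add: algebra_simps)
  have nz: "real n + 1 \<noteq> 0" by linarith
  have "(real n + 1) * (x^(Suc n) / fact (Suc n)) = (real n + 1) * ((x^(Suc n) / fact n) / (real n + 1))"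
    unfolding f by (simp only: divide_divide_eq_left mult.commute)
  also have "\<dots> = x * (x^n / fact n)" using nz by simp
  finally show ?thesis .
qed

lemma aux_alg1: "E2 = E1 + y2 \<Longrightarrow> E1 = E0 + y1 \<Longrightarrow> (r+2)*y2 = x*y1 \<Longrightarrow>
   (r+3)*E2 - x*E1 - ((r+2)*E1 - x*E0) = E1 + (E2 - E1::real)"
  by algebra

lemma ftrunc_Suc: "ftrunc (Suc j) x = ftrunc j x + etrunc (Suc j) x"
proof (cases j)
  case 0
  then show ?thesis by (simp add: ftrunc_def etrunc_def)
next
  case (Suc i)
  have d: "ftrunc (Suc j) x = (real i + 3) * etrunc (Suc (Suc i)) x - x * etrunc (Suc i) x"
    "ftrunc j x = (real i + 2) * etrunc (Suc i) x - x * etrunc i x"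
    using Suc by (simp_all add: ftrunc_def algebra_simps)
  have k: "(real i + 2) * (x^(Suc (Suc i)) / fact (Suc (Suc i))) = x * (x^(Suc i) / fact (Suc i))"
    using pow_fact_rec[of "Suc i" x] by (simp add: algebra_simps)
  have e1: "etrunc (Suc (Suc i)) x = etrunc (Suc i) x + x^(Suc (Suc i)) / fact (Suc (Suc i))" by (rule etrunc_Suc)
  have e2: "etrunc (Suc i) x = etrunc i x + x^(Suc i) / fact (Suc i)" by (rule etrunc_Suc)
  show ?thesis unfolding d unfolding Suc using e1 e2 k by algebra
qed

lemma etrunc_rec: "(real j + 1) * etrunc (Suc j) x = ftrunc j x + x * etrunc j x"
proof (cases j)
  case 0
  then show ?thesis by (simp add: ftrunc_def etrunc_def)
next
  case (Suc i)
  have d: "ftrunc j x = (real i + 2) * etrunc (Suc i) x - x * etrunc i x"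
    using Suc by (simp_all add: ftrunc_def algebra_simps)
  have k: "(real i + 2) * (x^(Suc (Suc i)) / fact (Suc (Suc i))) = x * (x^(Suc i) / fact (Suc i))"
    using pow_fact_rec[of "Suc i" x] by (simp add: algebra_simps)
  have e1: "etrunc (Suc (Suc i)) x = etrunc (Suc i) x + x^(Suc (Suc i)) / fact (Suc (Suc i))" by (rule etrunc_Suc)
  have e2: "etrunc (Suc i) x = etrunc i x + x^(Suc i) / fact (Suc i)" by (rule etrunc_Suc)
  have "(real i + 2) * etrunc (Suc (Suc i)) x = (real i + 2) * etrunc (Suc i) x - x * etrunc i x + x * etrunc (Suc i) x"
    using e1 e2 k by algebra
  then show ?thesis using Suc d by (simp add: algebra_simps)
qed

lemma ftrunc_rec: "(real j + 2) * ftrunc (j+2) x = (real j + 3 + x) * ftrunc (j+1) x - x * ftrunc j x"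
proof -
  have a1: "ftrunc (j+2) x = ftrunc (j+1) x + etrunc (j+2) x" using ftrunc_Suc[of "j+1" x] by simp
  have a2: "(real j + 2) * etrunc (j+2) x = ftrunc (j+1) x + x * etrunc (j+1) x" using etrunc_rec[of "j+1" x] by (simp add: algebra_simps)
  have a3: "ftrunc (j+1) x = ftrunc j x + etrunc (j+1) x" using ftrunc_Suc[of j x] by simp
  show ?thesis using a1 a2 a3 by algebra
qed

lemma ftrunc_0: "ftrunc 0 x = 1" by (simp add: ftrunc_def etrunc_def)
lemma ftrunc_1: "ftrunc (Suc 0) x = 2 + x" by (simp add: ftrunc_def etrunc_def)

lemma etrunc_ge1: "x \<ge> 0 \<Longrightarrow> etrunc j (x::real) \<ge> 1"
  by (induction j) (auto simp: etrunc_Suc etrunc_def[of 0] intro!: add_increasing2)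

lemma ftrunc_ge1: "x \<ge> 0 \<Longrightarrow> ftrunc j x \<ge> 1"
proof (induction j)
  case 0 then show ?case by (simp add: ftrunc_0)
next
  case (Suc j) then show ?case using etrunc_ge1[of x "Suc j"] by (simp add: ftrunc_Suc)
qed

definition gg :: "real \<Rightarrow> nat \<Rightarrow> real" where "gg a j = 2^j * ftrunc j (a^2)"

lemma gg_pos: "gg a j > 0" unfolding gg_def using ftrunc_ge1[of "a^2" j] by simp
lemma gg_nz [simp]: "gg a j \<noteq> 0" using gg_pos[of a j] by simp
lemma cco_gg: "cco a j k = gg a j / gg a k" unfolding cco_def gg_def ..
lemma gg_0: "gg a 0 = 1" by (simp add: gg_def ftrunc_0)
lemma gg_1: "gg a 1 = 2*(2+a^2)" by (simp add: gg_def ftrunc_1 algebra_simps)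
lemma gg_rec: "gg a (j+2) = (2*(real j+3+a^2) * gg a (j+1) - 4*a^2 * gg a j) / (real j + 2)"
proof -
  define p where "p = (2::real)^j"
  have g: "gg a (j+2) = 4*p*ftrunc (j+2) (a^2)" "gg a (j+1) = 2*p*ftrunc (j+1) (a^2)" "gg a j = p*ftrunc j (a^2)"
    unfolding gg_def p_def by (simp_all add: power_add)
  have "(real j + 2) * gg a (j+2) = 2*(real j+3+a^2) * gg a (j+1) - 4*a^2 * gg a j"
    unfolding g using ftrunc_rec[of j "a^2"] by algebra
  moreover have "real j + 2 \<noteq> 0" by linarith
  ultimately show ?thesis by (simp add: field_simps)
qed
lemma ftrunc_gg: "ftrunc j (a^2) = gg a j / 2^j" unfolding gg_def by simp

definition LR :: "real \<Rightarrow> (nat \<Rightarrow> real) \<Rightarrow> nat \<Rightarrow> real" where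
  "LR a c n = -a*(real n+2)*(real n+1)*c(n+2) + (real n+1)*(real n+4+2*a^2)*c(n+1)
     - (if 1 \<le> n then (2*real n+6+4*a^2)*c(n-1) else 0) + (if 2 \<le> n then 4*a*c(n-2) else 0)"

definition cO :: "real \<Rightarrow> nat \<Rightarrow> nat \<Rightarrow> real" where
  "cO a k i = (if i \<le> 2*k+1 then beta a k i else 0)"
definition cE :: "real \<Rightarrow> nat \<Rightarrow> nat \<Rightarrow> real" where
  "cE a k i = (if i \<le> 2*k then alpha a k i else 0)"

lemma LR_ge2: "2 \<le> n \<Longrightarrow> LR a c n = -a*(real n+2)*(real n+1)*c(n+2) + (real n+1)*(real n+4+2*a^2)*c(n+1)
     - (2*real n+6+4*a^2)*c(n-1) + 4*a*c(n-2)"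
  unfolding LR_def by simp
lemma LR_0: "LR a c 0 = -a*2*1*c 2 + 1*(4+2*a^2)*c 1"
  unfolding LR_def by (simp add: numeral_2_eq_2)
lemma LR_1: "LR a c 1 = -a*3*2*c 3 + 2*(5+2*a^2)*c 2 - (8+4*a^2)*c 0"
  unfolding LR_def by (simp add: numeral_eq_Suc)

lemma gg_Suc0: "gg a (Suc 0) = 2*(2+a^2)" using gg_1[of a] by simp

lemma gg_low: "a \<noteq> 0 \<Longrightarrow> gg a j = (2*(real j+3+a^2)*gg a (Suc j) - (real j+2)*gg a (Suc (Suc j)))/(4*a^2)"
  using gg_rec[of a j] by (simp add: field_simps)

lemma I1a:
  assumes "Suc (Suc m) \<le> k" and "a \<noteq> 0"
  shows "ftrunc (k) (a^2) * LR a (cO a (k)) (2*m+2) = 0"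
proof -
  note A = assms
  have hN: "2 \<le> 2*m+2" using A by simp
  have c0: "cO a (k) (2*m+2+2) = beta a (k) (2*(Suc (Suc m)))"
  proof -
    have e: "2*m+2+2 = 2*(Suc (Suc m))" by simp
    have r: "2*(Suc (Suc m)) \<le> 2*(k)+1" using A by simp
    show ?thesis unfolding e cO_def using r by simp
  qed
  have c1: "cO a (k) (2*m+2+1) = beta a (k) (2*(Suc m)+1)"
  proof -
    have e: "2*m+2+1 = 2*(Suc m)+1" by simp
    have r: "2*(Suc m)+1 \<le> 2*(k)+1" using A by simp
    show ?thesis unfolding e cO_def using r by simp
  qed
  have c2: "cO a (k) (2*m+2-1) = beta a (k) (2*(m)+1)"
  proof -
    have e: "2*m+2-1 = 2*(m)+1" by simp
    have r: "2*(m)+1 \<le> 2*(k)+1" using A by simp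
    show ?thesis unfolding e cO_def using r by simp
  qed
  have c3: "cO a (k) (2*m+2-2) = beta a (k) (2*(m))"
  proof -
    have e: "2*m+2-2 = 2*(m)" by simp
    have r: "2*(m) \<le> 2*(k)+1" using A by simp
    show ?thesis unfolding e cO_def using r by simp
  qed
  have j0: "(Suc (Suc m)::nat) \<le> k" using A by simp
  have j1: "(Suc m::nat) \<le> k" using A by simp
  have j2: "(m::nat) \<le> k" using A by simp
  have sh0: "(m::nat) < k" using A by simp
  have ss0: "SS a (k) (m) = DD (k) (m) + 2*a^2 * SS a (k) (Suc m)" by (rule SS_shift) (use sh0 in simp)
  have dd0: "DD (k) (m) = (2*real (m)+5) * DD (k) (Suc m)" by (rule DD_shift)
  have pp0: "PP a (k) (m) = 2*a^2 * PP a (k) (Suc m)" by (rule PP_shift) (use sh0 in simp)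
  have sh1: "(Suc m::nat) < k" using A by simp
  have ss1: "SS a (k) (Suc m) = DD (k) (Suc m) + 2*a^2 * SS a (k) (Suc (Suc m))" by (rule SS_shift) (use sh1 in simp)
  have dd1: "DD (k) (Suc m) = (2*real (Suc m)+5) * DD (k) (Suc (Suc m))" by (rule DD_shift)
  have pp1: "PP a (k) (Suc m) = 2*a^2 * PP a (k) (Suc (Suc m))" by (rule PP_shift) (use sh1 in simp)
  have gl: "gg a (m) = (2*(real (m)+3+a^2)*gg a (Suc m) - (real (m)+2)*gg a (Suc (Suc m)))/(4*a^2)" by (rule gg_low) (use A in simp)
  define K where "K = 2*real k+3"
  have k3: "K \<noteq> 0" unfolding K_def by linarith
  have rk: "real k = (K-3)/2" unfolding K_def by simp
  show ?thesis
    unfolding LR_ge2[OF hN] c0 c1 c2 c3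
    unfolding beta_even[OF j0] beta_odd[OF j0] beta_even[OF j1] beta_odd[OF j1] beta_even[OF j2] beta_odd[OF j2]
    unfolding ss0 dd0 pp0 ss1 dd1 pp1 cco_gg gl ftrunc_gg
    unfolding Bev_def Bov_def Aev_def Aov_def WW_def of_nat_Suc of_nat_add of_nat_mult of_nat_numeral of_nat_1 of_nat_0 power_Suc rk
    using A k3 by (simp add: field_simps power2_eq_square)
qed

lemma I1b:
  assumes "Suc (Suc m) \<le> k" and "a \<noteq> 0"
  shows "ftrunc (k) (a^2) * LR a (cO a (k)) (2*m+3) = 0"
proof -
  note A = assms
  have hN: "2 \<le> 2*m+3" using A by simp
  have c0: "cO a (k) (2*m+3+2) = beta a (k) (2*(Suc (Suc m))+1)"
  proof -
    have e: "2*m+3+2 = 2*(Suc (Suc m))+1" by simp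
    have r: "2*(Suc (Suc m))+1 \<le> 2*(k)+1" using A by simp
    show ?thesis unfolding e cO_def using r by simp
  qed
  have c1: "cO a (k) (2*m+3+1) = beta a (k) (2*(Suc (Suc m)))"
  proof -
    have e: "2*m+3+1 = 2*(Suc (Suc m))" by simp
    have r: "2*(Suc (Suc m)) \<le> 2*(k)+1" using A by simp
    show ?thesis unfolding e cO_def using r by simp
  qed
  have c2: "cO a (k) (2*m+3-1) = beta a (k) (2*(Suc m))"
  proof -
    have e: "2*m+3-1 = 2*(Suc m)" by simp
    have r: "2*(Suc m) \<le> 2*(k)+1" using A by simp
    show ?thesis unfolding e cO_def using r by simp
  qed
  have c3: "cO a (k) (2*m+3-2) = beta a (k) (2*(m)+1)"
  proof -
    have e: "2*m+3-2 = 2*(m)+1" by simp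
    have r: "2*(m)+1 \<le> 2*(k)+1" using A by simp
    show ?thesis unfolding e cO_def using r by simp
  qed
  have j0: "(Suc (Suc m)::nat) \<le> k" using A by simp
  have j1: "(Suc m::nat) \<le> k" using A by simp
  have j2: "(m::nat) \<le> k" using A by simp
  have sh0: "(m::nat) < k" using A by simp
  have ss0: "SS a (k) (m) = DD (k) (m) + 2*a^2 * SS a (k) (Suc m)" by (rule SS_shift) (use sh0 in simp)
  have dd0: "DD (k) (m) = (2*real (m)+5) * DD (k) (Suc m)" by (rule DD_shift)
  have pp0: "PP a (k) (m) = 2*a^2 * PP a (k) (Suc m)" by (rule PP_shift) (use sh0 in simp)
  have sh1: "(Suc m::nat) < k" using A by simp
  have ss1: "SS a (k) (Suc m) = DD (k) (Suc m) + 2*a^2 * SS a (k) (Suc (Suc m))" by (rule SS_shift) (use sh1 in simp)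
  have dd1: "DD (k) (Suc m) = (2*real (Suc m)+5) * DD (k) (Suc (Suc m))" by (rule DD_shift)
  have pp1: "PP a (k) (Suc m) = 2*a^2 * PP a (k) (Suc (Suc m))" by (rule PP_shift) (use sh1 in simp)
  have gl: "gg a (m) = (2*(real (m)+3+a^2)*gg a (Suc m) - (real (m)+2)*gg a (Suc (Suc m)))/(4*a^2)" by (rule gg_low) (use A in simp)
  define K where "K = 2*real k+3"
  have k3: "K \<noteq> 0" unfolding K_def by linarith
  have rk: "real k = (K-3)/2" unfolding K_def by simp
  show ?thesis
    unfolding LR_ge2[OF hN] c0 c1 c2 c3
    unfolding beta_even[OF j0] beta_odd[OF j0] beta_even[OF j1] beta_odd[OF j1] beta_even[OF j2] beta_odd[OF j2]
    unfolding ss0 dd0 pp0 ss1 dd1 pp1 cco_gg gl ftrunc_gg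
    unfolding Bev_def Bov_def Aev_def Aov_def WW_def of_nat_Suc of_nat_add of_nat_mult of_nat_numeral of_nat_1 of_nat_0 power_Suc rk
    using A k3 by (simp add: field_simps power2_eq_square)
qed

lemma I1a0:
  assumes "Suc 0 \<le> k" and "a \<noteq> 0"
  shows "ftrunc (k) (a^2) * LR a (cO a (k)) (0) = 0"
proof -
  note A = assms
  have c0: "cO a (k) (2) = beta a (k) (2*(Suc 0))"
    unfolding cO_def using A by simp
  have c1: "cO a (k) (1) = beta a (k) (2*(0)+1)"
    unfolding cO_def using A by simp
  have j0: "(0::nat) \<le> k" using A by simp
  have j1: "(Suc 0::nat) \<le> k" using A by simp
  have sh0: "(0::nat) < k" using A by simp
  have ss0: "SS a (k) (0) = DD (k) (0) + 2*a^2 * SS a (k) (Suc 0)" by (rule SS_shift) (use sh0 in simp)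
  have dd0: "DD (k) (0) = (2*real (0)+5) * DD (k) (Suc 0)" by (rule DD_shift)
  have pp0: "PP a (k) (0) = 2*a^2 * PP a (k) (Suc 0)" by (rule PP_shift) (use sh0 in simp)
  define K where "K = 2*real k+3"
  have k3: "K \<noteq> 0" unfolding K_def by linarith
  have rk: "real k = (K-3)/2" unfolding K_def by simp
  show ?thesis
    unfolding LR_0 c0 c1
    unfolding beta_even[OF j0] beta_odd[OF j0] beta_even[OF j1] beta_odd[OF j1]
    unfolding ss0 dd0 pp0 cco_gg gg_0 gg_Suc0 ftrunc_gg
    unfolding Bev_def Bov_def Aev_def Aov_def WW_def of_nat_Suc of_nat_add of_nat_mult of_nat_numeral of_nat_1 of_nat_0 power_Suc rk
    using A k3 by (simp add: field_simps power2_eq_square)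
qed

lemma I1b0:
  assumes "Suc 0 \<le> k" and "a \<noteq> 0"
  shows "ftrunc (k) (a^2) * LR a (cO a (k)) (1) = 0"
proof -
  note A = assms
  have c0: "cO a (k) (3) = beta a (k) (2*(Suc 0)+1)"
    unfolding cO_def using A by simp
  have c1: "cO a (k) (2) = beta a (k) (2*(Suc 0))"
    unfolding cO_def using A by simp
  have c2: "cO a (k) (0) = beta a (k) (2*(0))"
    unfolding cO_def using A by simp
  have j0: "(0::nat) \<le> k" using A by simp
  have j1: "(Suc 0::nat) \<le> k" using A by simp
  have sh0: "(0::nat) < k" using A by simp
  have ss0: "SS a (k) (0) = DD (k) (0) + 2*a^2 * SS a (k) (Suc 0)" by (rule SS_shift) (use sh0 in simp)
  have dd0: "DD (k) (0) = (2*real (0)+5) * DD (k) (Suc 0)" by (rule DD_shift)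
  have pp0: "PP a (k) (0) = 2*a^2 * PP a (k) (Suc 0)" by (rule PP_shift) (use sh0 in simp)
  define K where "K = 2*real k+3"
  have k3: "K \<noteq> 0" unfolding K_def by linarith
  have rk: "real k = (K-3)/2" unfolding K_def by simp
  show ?thesis
    unfolding LR_1 c0 c1 c2
    unfolding beta_even[OF j0] beta_odd[OF j0] beta_even[OF j1] beta_odd[OF j1]
    unfolding ss0 dd0 pp0 cco_gg gg_0 gg_Suc0 ftrunc_gg
    unfolding Bev_def Bov_def Aev_def Aov_def WW_def of_nat_Suc of_nat_add of_nat_mult of_nat_numeral of_nat_1 of_nat_0 power_Suc rk
    using A k3 by (simp add: field_simps power2_eq_square)
qed

lemma I1c:
  assumes "a \<noteq> 0"
  shows "ftrunc (Suc m) (a^2) * LR a (cO a (Suc m)) (2*m+2) = (2*real (Suc m)+2)*(2*real (Suc m)+1)*ftrunc (Suc (Suc m)) (a^2)"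
proof -
  note A = assms
  have hN: "2 \<le> 2*m+2" using A by simp
  have c0: "cO a (Suc m) (2*m+2+2) = 0" unfolding cO_def using A by simp
  have c1: "cO a (Suc m) (2*m+2+1) = beta a (Suc m) (2*(Suc m)+1)"
  proof -
    have e: "2*m+2+1 = 2*(Suc m)+1" by simp
    have r: "2*(Suc m)+1 \<le> 2*(Suc m)+1" using A by simp
    show ?thesis unfolding e cO_def using r by simp
  qed
  have c2: "cO a (Suc m) (2*m+2-1) = beta a (Suc m) (2*(m)+1)"
  proof -
    have e: "2*m+2-1 = 2*(m)+1" by simp
    have r: "2*(m)+1 \<le> 2*(Suc m)+1" using A by simp
    show ?thesis unfolding e cO_def using r by simp
  qed
  have c3: "cO a (Suc m) (2*m+2-2) = beta a (Suc m) (2*(m))"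
  proof -
    have e: "2*m+2-2 = 2*(m)" by simp
    have r: "2*(m) \<le> 2*(Suc m)+1" using A by simp
    show ?thesis unfolding e cO_def using r by simp
  qed
  have j0: "(Suc m::nat) \<le> Suc m" using A by simp
  have j1: "(m::nat) \<le> Suc m" using A by simp
  have sh0: "(m::nat) < Suc m" using A by simp
  have ss0: "SS a (Suc m) (m) = DD (Suc m) (m) + 2*a^2 * SS a (Suc m) (Suc m)" by (rule SS_shift) (use sh0 in simp)
  have dd0: "DD (Suc m) (m) = (2*real (m)+5) * DD (Suc m) (Suc m)" by (rule DD_shift)
  have pp0: "PP a (Suc m) (m) = 2*a^2 * PP a (Suc m) (Suc m)" by (rule PP_shift) (use sh0 in simp)
  have gl: "gg a (m) = (2*(real (m)+3+a^2)*gg a (Suc m) - (real (m)+2)*gg a (Suc (Suc m)))/(4*a^2)" by (rule gg_low) (use A in simp)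
  define K where "K = 2*real m+5"
  have k3: "K \<noteq> 0" unfolding K_def by linarith
  have rk: "real m = (K-5)/2" unfolding K_def by simp
  show ?thesis
    unfolding LR_ge2[OF hN] c0 c1 c2 c3
    unfolding beta_even[OF j0] beta_odd[OF j0] beta_even[OF j1] beta_odd[OF j1]
    unfolding ss0 dd0 pp0 SS_top DD_top PP_top cco_gg gl ftrunc_gg
    unfolding Bev_def Bov_def Aev_def Aov_def WW_def of_nat_Suc of_nat_add of_nat_mult of_nat_numeral of_nat_1 of_nat_0 power_Suc rk
    using A k3 by (simp add: field_simps power2_eq_square)
qed

lemma I1d:
  assumes "a \<noteq> 0"
  shows "ftrunc (Suc m) (a^2) * LR a (cO a (Suc m)) (2*m+3) = -2*a*(2*real (Suc m)+2)*ftrunc (Suc (Suc m)) (a^2)"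
proof -
  note A = assms
  have hN: "2 \<le> 2*m+3" using A by simp
  have c0: "cO a (Suc m) (2*m+3+2) = 0" unfolding cO_def using A by simp
  have c1: "cO a (Suc m) (2*m+3+1) = 0" unfolding cO_def using A by simp
  have c2: "cO a (Suc m) (2*m+3-1) = beta a (Suc m) (2*(Suc m))"
  proof -
    have e: "2*m+3-1 = 2*(Suc m)" by simp
    have r: "2*(Suc m) \<le> 2*(Suc m)+1" using A by simp
    show ?thesis unfolding e cO_def using r by simp
  qed
  have c3: "cO a (Suc m) (2*m+3-2) = beta a (Suc m) (2*(m)+1)"
  proof -
    have e: "2*m+3-2 = 2*(m)+1" by simp
    have r: "2*(m)+1 \<le> 2*(Suc m)+1" using A by simp
    show ?thesis unfolding e cO_def using r by simp
  qed
  have j0: "(Suc m::nat) \<le> Suc m" using A by simp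
  have j1: "(m::nat) \<le> Suc m" using A by simp
  have sh0: "(m::nat) < Suc m" using A by simp
  have ss0: "SS a (Suc m) (m) = DD (Suc m) (m) + 2*a^2 * SS a (Suc m) (Suc m)" by (rule SS_shift) (use sh0 in simp)
  have dd0: "DD (Suc m) (m) = (2*real (m)+5) * DD (Suc m) (Suc m)" by (rule DD_shift)
  have pp0: "PP a (Suc m) (m) = 2*a^2 * PP a (Suc m) (Suc m)" by (rule PP_shift) (use sh0 in simp)
  have gl: "gg a (m) = (2*(real (m)+3+a^2)*gg a (Suc m) - (real (m)+2)*gg a (Suc (Suc m)))/(4*a^2)" by (rule gg_low) (use A in simp)
  define K where "K = 2*real m+5"
  have k3: "K \<noteq> 0" unfolding K_def by linarith
  have rk: "real m = (K-5)/2" unfolding K_def by simp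
  show ?thesis
    unfolding LR_ge2[OF hN] c0 c1 c2 c3
    unfolding beta_even[OF j0] beta_odd[OF j0] beta_even[OF j1] beta_odd[OF j1]
    unfolding ss0 dd0 pp0 SS_top DD_top PP_top cco_gg gl ftrunc_gg
    unfolding Bev_def Bov_def Aev_def Aov_def WW_def of_nat_Suc of_nat_add of_nat_mult of_nat_numeral of_nat_1 of_nat_0 power_Suc rk
    using A k3 by (simp add: field_simps power2_eq_square)
qed

lemma I1c0:
  assumes "a \<noteq> 0"
  shows "ftrunc (0) (a^2) * LR a (cO a (0)) (0) = 2*ftrunc (Suc 0) (a^2)"
proof -
  note A = assms
  have c0: "cO a (0) (2) = 0" unfolding cO_def using A by simp
  have c1: "cO a (0) (1) = beta a (0) (2*(0)+1)"
    unfolding cO_def using A by simp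
  have j0: "(0::nat) \<le> 0" using A by simp
  show ?thesis
    unfolding LR_0 c0 c1
    unfolding beta_even[OF j0] beta_odd[OF j0]
    unfolding SS_top DD_top PP_top cco_gg gg_0 gg_Suc0 ftrunc_gg
    unfolding Bev_def Bov_def Aev_def Aov_def WW_def of_nat_Suc of_nat_add of_nat_mult of_nat_numeral of_nat_1 of_nat_0 power_Suc
    using A by (simp add: field_simps power2_eq_square)
qed

lemma I1d0:
  assumes "a \<noteq> 0"
  shows "ftrunc (0) (a^2) * LR a (cO a (0)) (1) = -4*a*ftrunc (Suc 0) (a^2)"
proof -
  note A = assms
  have c0: "cO a (0) (3) = 0" unfolding cO_def using A by simp
  have c1: "cO a (0) (2) = 0" unfolding cO_def using A by simp
  have c2: "cO a (0) (0) = beta a (0) (2*(0))"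
    unfolding cO_def using A by simp
  have j0: "(0::nat) \<le> 0" using A by simp
  show ?thesis
    unfolding LR_1 c0 c1 c2
    unfolding beta_even[OF j0] beta_odd[OF j0]
    unfolding SS_top DD_top PP_top cco_gg gg_0 gg_Suc0 ftrunc_gg
    unfolding Bev_def Bov_def Aev_def Aov_def WW_def of_nat_Suc of_nat_add of_nat_mult of_nat_numeral of_nat_1 of_nat_0 power_Suc
    using A by (simp add: field_simps power2_eq_square)
qed

lemma I1e:
  assumes "a \<noteq> 0"
  shows "ftrunc (k) (a^2) * LR a (cO a (k)) (2*k+2) = -(4*real k+10)*ftrunc k (a^2)"
proof -
  note A = assms
  have hN: "2 \<le> 2*k+2" using A by simp
  have c0: "cO a (k) (2*k+2+2) = 0" unfolding cO_def using A by simp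
  have c1: "cO a (k) (2*k+2+1) = 0" unfolding cO_def using A by simp
  have c2: "cO a (k) (2*k+2-1) = beta a (k) (2*(k)+1)"
  proof -
    have e: "2*k+2-1 = 2*(k)+1" by simp
    have r: "2*(k)+1 \<le> 2*(k)+1" using A by simp
    show ?thesis unfolding e cO_def using r by simp
  qed
  have c3: "cO a (k) (2*k+2-2) = beta a (k) (2*(k))"
  proof -
    have e: "2*k+2-2 = 2*(k)" by simp
    have r: "2*(k) \<le> 2*(k)+1" using A by simp
    show ?thesis unfolding e cO_def using r by simp
  qed
  have j0: "(k::nat) \<le> k" using A by simp
  define K where "K = 2*real k+3"
  have k3: "K \<noteq> 0" unfolding K_def by linarith
  have rk: "real k = (K-3)/2" unfolding K_def by simp
  show ?thesis
    unfolding LR_ge2[OF hN] c0 c1 c2 c3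
    unfolding beta_even[OF j0] beta_odd[OF j0]
    unfolding SS_top DD_top PP_top cco_gg  ftrunc_gg
    unfolding Bev_def Bov_def Aev_def Aov_def WW_def of_nat_Suc of_nat_add of_nat_mult of_nat_numeral of_nat_1 of_nat_0 power_Suc rk
    using A k3 by (simp add: field_simps power2_eq_square)
qed

lemma I1f:
  assumes "a \<noteq> 0"
  shows "ftrunc (k) (a^2) * LR a (cO a (k)) (2*k+3) = 4*a*ftrunc k (a^2)"
proof -
  note A = assms
  have hN: "2 \<le> 2*k+3" using A by simp
  have c0: "cO a (k) (2*k+3+2) = 0" unfolding cO_def using A by simp
  have c1: "cO a (k) (2*k+3+1) = 0" unfolding cO_def using A by simp
  have c2: "cO a (k) (2*k+3-1) = 0" unfolding cO_def using A by simp
  have c3: "cO a (k) (2*k+3-2) = beta a (k) (2*(k)+1)"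
  proof -
    have e: "2*k+3-2 = 2*(k)+1" by simp
    have r: "2*(k)+1 \<le> 2*(k)+1" using A by simp
    show ?thesis unfolding e cO_def using r by simp
  qed
  have j0: "(k::nat) \<le> k" using A by simp
  define K where "K = 2*real k+3"
  have k3: "K \<noteq> 0" unfolding K_def by linarith
  have rk: "real k = (K-3)/2" unfolding K_def by simp
  show ?thesis
    unfolding LR_ge2[OF hN] c0 c1 c2 c3
    unfolding beta_even[OF j0] beta_odd[OF j0]
    unfolding SS_top DD_top PP_top cco_gg  ftrunc_gg
    unfolding Bev_def Bov_def Aev_def Aov_def WW_def of_nat_Suc of_nat_add of_nat_mult of_nat_numeral of_nat_1 of_nat_0 power_Suc rk
    using A k3 by (simp add: field_simps power2_eq_square)
qed

lemma I2a:
  assumes "Suc (Suc m) \<le> k" and "a \<noteq> 0"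
  shows "2 * ftrunc (k) (a^2) * LR a (cE a (k)) (2*m+2) = 0"
proof -
  note A = assms
  have hN: "2 \<le> 2*m+2" using A by simp
  have c0: "cE a (k) (2*m+2+2) = alpha a (k) (2*(Suc (Suc m)))"
  proof -
    have e: "2*m+2+2 = 2*(Suc (Suc m))" by simp
    have r: "2*(Suc (Suc m)) \<le> 2*(k)" using A by simp
    show ?thesis unfolding e cE_def using r by simp
  qed
  have c1: "cE a (k) (2*m+2+1) = alpha a (k) (2*(Suc m)+1)"
  proof -
    have e: "2*m+2+1 = 2*(Suc m)+1" by simp
    have r: "2*(Suc m)+1 \<le> 2*(k)" using A by simp
    show ?thesis unfolding e cE_def using r by simp
  qed
  have c2: "cE a (k) (2*m+2-1) = alpha a (k) (2*(m)+1)"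
  proof -
    have e: "2*m+2-1 = 2*(m)+1" by simp
    have r: "2*(m)+1 \<le> 2*(k)" using A by simp
    show ?thesis unfolding e cE_def using r by simp
  qed
  have c3: "cE a (k) (2*m+2-2) = alpha a (k) (2*(m))"
  proof -
    have e: "2*m+2-2 = 2*(m)" by simp
    have r: "2*(m) \<le> 2*(k)" using A by simp
    show ?thesis unfolding e cE_def using r by simp
  qed
  have j0: "(Suc (Suc m)::nat) \<le> k" using A by simp
  have jj0: "(Suc (Suc m)::nat) \<le> k \<and> a \<noteq> 0" using A by simp
  have j1: "(Suc m::nat) \<le> k" using A by simp
  have jj1: "(Suc m::nat) \<le> k \<and> a \<noteq> 0" using A by simp
  have j2: "(m::nat) \<le> k" using A by simp
  have jj2: "(m::nat) \<le> k \<and> a \<noteq> 0" using A by simp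
  have sh0: "(m::nat) < k" using A by simp
  have ss0: "SS a (k) (m) = DD (k) (m) + 2*a^2 * SS a (k) (Suc m)" by (rule SS_shift) (use sh0 in simp)
  have dd0: "DD (k) (m) = (2*real (m)+5) * DD (k) (Suc m)" by (rule DD_shift)
  have pp0: "PP a (k) (m) = 2*a^2 * PP a (k) (Suc m)" by (rule PP_shift) (use sh0 in simp)
  have sh1: "(Suc m::nat) < k" using A by simp
  have ss1: "SS a (k) (Suc m) = DD (k) (Suc m) + 2*a^2 * SS a (k) (Suc (Suc m))" by (rule SS_shift) (use sh1 in simp)
  have dd1: "DD (k) (Suc m) = (2*real (Suc m)+5) * DD (k) (Suc (Suc m))" by (rule DD_shift)
  have pp1: "PP a (k) (Suc m) = 2*a^2 * PP a (k) (Suc (Suc m))" by (rule PP_shift) (use sh1 in simp)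
  have gl: "gg a (m) = (2*(real (m)+3+a^2)*gg a (Suc m) - (real (m)+2)*gg a (Suc (Suc m)))/(4*a^2)" by (rule gg_low) (use A in simp)
  define K where "K = 2*real k+3"
  have k3: "K \<noteq> 0" unfolding K_def by linarith
  have rk: "real k = (K-3)/2" unfolding K_def by simp
  show ?thesis
    unfolding LR_ge2[OF hN] c0 c1 c2 c3
    unfolding alpha_even[OF j0] alpha_odd[OF conjunct1[OF jj0] conjunct2[OF jj0]] alpha_even[OF j1] alpha_odd[OF conjunct1[OF jj1] conjunct2[OF jj1]] alpha_even[OF j2] alpha_odd[OF conjunct1[OF jj2] conjunct2[OF jj2]]
    unfolding ss0 dd0 pp0 ss1 dd1 pp1 cco_gg gl ftrunc_gg
    unfolding Bev_def Bov_def Aev_def Aov_def WW_def of_nat_Suc of_nat_add of_nat_mult of_nat_numeral of_nat_1 of_nat_0 power_Suc rk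
    using A k3 by (simp add: field_simps power2_eq_square)
qed

lemma I2b:
  assumes "Suc (Suc (Suc m)) \<le> k" and "a \<noteq> 0"
  shows "2 * ftrunc (k) (a^2) * LR a (cE a (k)) (2*m+3) = 0"
proof -
  note A = assms
  have hN: "2 \<le> 2*m+3" using A by simp
  have c0: "cE a (k) (2*m+3+2) = alpha a (k) (2*(Suc (Suc m))+1)"
  proof -
    have e: "2*m+3+2 = 2*(Suc (Suc m))+1" by simp
    have r: "2*(Suc (Suc m))+1 \<le> 2*(k)" using A by simp
    show ?thesis unfolding e cE_def using r by simp
  qed
  have c1: "cE a (k) (2*m+3+1) = alpha a (k) (2*(Suc (Suc m)))"
  proof -
    have e: "2*m+3+1 = 2*(Suc (Suc m))" by simp
    have r: "2*(Suc (Suc m)) \<le> 2*(k)" using A by simp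
    show ?thesis unfolding e cE_def using r by simp
  qed
  have c2: "cE a (k) (2*m+3-1) = alpha a (k) (2*(Suc m))"
  proof -
    have e: "2*m+3-1 = 2*(Suc m)" by simp
    have r: "2*(Suc m) \<le> 2*(k)" using A by simp
    show ?thesis unfolding e cE_def using r by simp
  qed
  have c3: "cE a (k) (2*m+3-2) = alpha a (k) (2*(m)+1)"
  proof -
    have e: "2*m+3-2 = 2*(m)+1" by simp
    have r: "2*(m)+1 \<le> 2*(k)" using A by simp
    show ?thesis unfolding e cE_def using r by simp
  qed
  have j0: "(Suc (Suc m)::nat) \<le> k" using A by simp
  have jj0: "(Suc (Suc m)::nat) \<le> k \<and> a \<noteq> 0" using A by simp
  have j1: "(Suc m::nat) \<le> k" using A by simp
  have jj1: "(Suc m::nat) \<le> k \<and> a \<noteq> 0" using A by simp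
  have j2: "(m::nat) \<le> k" using A by simp
  have jj2: "(m::nat) \<le> k \<and> a \<noteq> 0" using A by simp
  have sh0: "(m::nat) < k" using A by simp
  have ss0: "SS a (k) (m) = DD (k) (m) + 2*a^2 * SS a (k) (Suc m)" by (rule SS_shift) (use sh0 in simp)
  have dd0: "DD (k) (m) = (2*real (m)+5) * DD (k) (Suc m)" by (rule DD_shift)
  have pp0: "PP a (k) (m) = 2*a^2 * PP a (k) (Suc m)" by (rule PP_shift) (use sh0 in simp)
  have sh1: "(Suc m::nat) < k" using A by simp
  have ss1: "SS a (k) (Suc m) = DD (k) (Suc m) + 2*a^2 * SS a (k) (Suc (Suc m))" by (rule SS_shift) (use sh1 in simp)
  have dd1: "DD (k) (Suc m) = (2*real (Suc m)+5) * DD (k) (Suc (Suc m))" by (rule DD_shift)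
  have pp1: "PP a (k) (Suc m) = 2*a^2 * PP a (k) (Suc (Suc m))" by (rule PP_shift) (use sh1 in simp)
  have gl: "gg a (m) = (2*(real (m)+3+a^2)*gg a (Suc m) - (real (m)+2)*gg a (Suc (Suc m)))/(4*a^2)" by (rule gg_low) (use A in simp)
  define K where "K = 2*real k+3"
  have k3: "K \<noteq> 0" unfolding K_def by linarith
  have rk: "real k = (K-3)/2" unfolding K_def by simp
  show ?thesis
    unfolding LR_ge2[OF hN] c0 c1 c2 c3
    unfolding alpha_even[OF j0] alpha_odd[OF conjunct1[OF jj0] conjunct2[OF jj0]] alpha_even[OF j1] alpha_odd[OF conjunct1[OF jj1] conjunct2[OF jj1]] alpha_even[OF j2] alpha_odd[OF conjunct1[OF jj2] conjunct2[OF jj2]]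
    unfolding ss0 dd0 pp0 ss1 dd1 pp1 cco_gg gl ftrunc_gg
    unfolding Bev_def Bov_def Aev_def Aov_def WW_def of_nat_Suc of_nat_add of_nat_mult of_nat_numeral of_nat_1 of_nat_0 power_Suc rk
    using A k3 by (simp add: field_simps power2_eq_square)
qed

lemma I2a0:
  assumes "Suc 0 \<le> k" and "a \<noteq> 0"
  shows "2 * ftrunc (k) (a^2) * LR a (cE a (k)) (0) = 0"
proof -
  note A = assms
  have c0: "cE a (k) (2) = alpha a (k) (2*(Suc 0))"
    unfolding cE_def using A by simp
  have c1: "cE a (k) (1) = alpha a (k) (2*(0)+1)"
    unfolding cE_def using A by simp
  have j0: "(0::nat) \<le> k" using A by simp
  have jj0: "(0::nat) \<le> k \<and> a \<noteq> 0" using A by simp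
  have j1: "(Suc 0::nat) \<le> k" using A by simp
  have jj1: "(Suc 0::nat) \<le> k \<and> a \<noteq> 0" using A by simp
  have sh0: "(0::nat) < k" using A by simp
  have ss0: "SS a (k) (0) = DD (k) (0) + 2*a^2 * SS a (k) (Suc 0)" by (rule SS_shift) (use sh0 in simp)
  have dd0: "DD (k) (0) = (2*real (0)+5) * DD (k) (Suc 0)" by (rule DD_shift)
  have pp0: "PP a (k) (0) = 2*a^2 * PP a (k) (Suc 0)" by (rule PP_shift) (use sh0 in simp)
  define K where "K = 2*real k+3"
  have k3: "K \<noteq> 0" unfolding K_def by linarith
  have rk: "real k = (K-3)/2" unfolding K_def by simp
  show ?thesis
    unfolding LR_0 c0 c1
    unfolding alpha_even[OF j0] alpha_odd[OF conjunct1[OF jj0] conjunct2[OF jj0]] alpha_even[OF j1] alpha_odd[OF conjunct1[OF jj1] conjunct2[OF jj1]]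
    unfolding ss0 dd0 pp0 cco_gg gg_0 gg_Suc0 ftrunc_gg
    unfolding Bev_def Bov_def Aev_def Aov_def WW_def of_nat_Suc of_nat_add of_nat_mult of_nat_numeral of_nat_1 of_nat_0 power_Suc rk
    using A k3 by (simp add: field_simps power2_eq_square)
qed

lemma I2b0:
  assumes "Suc (Suc 0) \<le> k" and "a \<noteq> 0"
  shows "2 * ftrunc (k) (a^2) * LR a (cE a (k)) (1) = 0"
proof -
  note A = assms
  have c0: "cE a (k) (3) = alpha a (k) (2*(Suc 0)+1)"
    unfolding cE_def using A by simp
  have c1: "cE a (k) (2) = alpha a (k) (2*(Suc 0))"
    unfolding cE_def using A by simp
  have c2: "cE a (k) (0) = alpha a (k) (2*(0))"
    unfolding cE_def using A by simp
  have j0: "(0::nat) \<le> k" using A by simp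
  have jj0: "(0::nat) \<le> k \<and> a \<noteq> 0" using A by simp
  have j1: "(Suc 0::nat) \<le> k" using A by simp
  have jj1: "(Suc 0::nat) \<le> k \<and> a \<noteq> 0" using A by simp
  have sh0: "(0::nat) < k" using A by simp
  have ss0: "SS a (k) (0) = DD (k) (0) + 2*a^2 * SS a (k) (Suc 0)" by (rule SS_shift) (use sh0 in simp)
  have dd0: "DD (k) (0) = (2*real (0)+5) * DD (k) (Suc 0)" by (rule DD_shift)
  have pp0: "PP a (k) (0) = 2*a^2 * PP a (k) (Suc 0)" by (rule PP_shift) (use sh0 in simp)
  define K where "K = 2*real k+3"
  have k3: "K \<noteq> 0" unfolding K_def by linarith
  have rk: "real k = (K-3)/2" unfolding K_def by simp
  show ?thesis
    unfolding LR_1 c0 c1 c2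
    unfolding alpha_even[OF j0] alpha_odd[OF conjunct1[OF jj0] conjunct2[OF jj0]] alpha_even[OF j1] alpha_odd[OF conjunct1[OF jj1] conjunct2[OF jj1]]
    unfolding ss0 dd0 pp0 cco_gg gg_0 gg_Suc0 ftrunc_gg
    unfolding Bev_def Bov_def Aev_def Aov_def WW_def of_nat_Suc of_nat_add of_nat_mult of_nat_numeral of_nat_1 of_nat_0 power_Suc rk
    using A k3 by (simp add: field_simps power2_eq_square)
qed

lemma I2c:
  assumes "a \<noteq> 0"
  shows "2 * ftrunc (Suc (Suc m)) (a^2) * LR a (cE a (Suc (Suc m))) (2*m+3) = 0"
proof -
  note A = assms
  have hN: "2 \<le> 2*m+3" using A by simp
  have c0: "cE a (Suc (Suc m)) (2*m+3+2) = 0" unfolding cE_def using A by simp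
  have c1: "cE a (Suc (Suc m)) (2*m+3+1) = alpha a (Suc (Suc m)) (2*(Suc (Suc m)))"
  proof -
    have e: "2*m+3+1 = 2*(Suc (Suc m))" by simp
    have r: "2*(Suc (Suc m)) \<le> 2*(Suc (Suc m))" using A by simp
    show ?thesis unfolding e cE_def using r by simp
  qed
  have c2: "cE a (Suc (Suc m)) (2*m+3-1) = alpha a (Suc (Suc m)) (2*(Suc m))"
  proof -
    have e: "2*m+3-1 = 2*(Suc m)" by simp
    have r: "2*(Suc m) \<le> 2*(Suc (Suc m))" using A by simp
    show ?thesis unfolding e cE_def using r by simp
  qed
  have c3: "cE a (Suc (Suc m)) (2*m+3-2) = alpha a (Suc (Suc m)) (2*(m)+1)"
  proof -
    have e: "2*m+3-2 = 2*(m)+1" by simp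
    have r: "2*(m)+1 \<le> 2*(Suc (Suc m))" using A by simp
    show ?thesis unfolding e cE_def using r by simp
  qed
  have j0: "(Suc (Suc m)::nat) \<le> Suc (Suc m)" using A by simp
  have jj0: "(Suc (Suc m)::nat) \<le> Suc (Suc m) \<and> a \<noteq> 0" using A by simp
  have j1: "(Suc m::nat) \<le> Suc (Suc m)" using A by simp
  have jj1: "(Suc m::nat) \<le> Suc (Suc m) \<and> a \<noteq> 0" using A by simp
  have j2: "(m::nat) \<le> Suc (Suc m)" using A by simp
  have jj2: "(m::nat) \<le> Suc (Suc m) \<and> a \<noteq> 0" using A by simp
  have sh0: "(m::nat) < Suc (Suc m)" using A by simp
  have ss0: "SS a (Suc (Suc m)) (m) = DD (Suc (Suc m)) (m) + 2*a^2 * SS a (Suc (Suc m)) (Suc m)" by (rule SS_shift) (use sh0 in simp)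
  have dd0: "DD (Suc (Suc m)) (m) = (2*real (m)+5) * DD (Suc (Suc m)) (Suc m)" by (rule DD_shift)
  have pp0: "PP a (Suc (Suc m)) (m) = 2*a^2 * PP a (Suc (Suc m)) (Suc m)" by (rule PP_shift) (use sh0 in simp)
  have sh1: "(Suc m::nat) < Suc (Suc m)" using A by simp
  have ss1: "SS a (Suc (Suc m)) (Suc m) = DD (Suc (Suc m)) (Suc m) + 2*a^2 * SS a (Suc (Suc m)) (Suc (Suc m))" by (rule SS_shift) (use sh1 in simp)
  have dd1: "DD (Suc (Suc m)) (Suc m) = (2*real (Suc m)+5) * DD (Suc (Suc m)) (Suc (Suc m))" by (rule DD_shift)
  have pp1: "PP a (Suc (Suc m)) (Suc m) = 2*a^2 * PP a (Suc (Suc m)) (Suc (Suc m))" by (rule PP_shift) (use sh1 in simp)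
  have gl: "gg a (m) = (2*(real (m)+3+a^2)*gg a (Suc m) - (real (m)+2)*gg a (Suc (Suc m)))/(4*a^2)" by (rule gg_low) (use A in simp)
  define K where "K = 2*real m+7"
  have k3: "K \<noteq> 0" unfolding K_def by linarith
  have rk: "real m = (K-7)/2" unfolding K_def by simp
  show ?thesis
    unfolding LR_ge2[OF hN] c0 c1 c2 c3
    unfolding alpha_even[OF j0] alpha_odd[OF conjunct1[OF jj0] conjunct2[OF jj0]] alpha_even[OF j1] alpha_odd[OF conjunct1[OF jj1] conjunct2[OF jj1]] alpha_even[OF j2] alpha_odd[OF conjunct1[OF jj2] conjunct2[OF jj2]]
    unfolding ss0 dd0 pp0 ss1 dd1 pp1 SS_top DD_top PP_top cco_gg gl ftrunc_gg
    unfolding Bev_def Bov_def Aev_def Aov_def WW_def of_nat_Suc of_nat_add of_nat_mult of_nat_numeral of_nat_1 of_nat_0 power_Suc rk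
    using A k3 by (simp add: field_simps power2_eq_square)
qed

lemma I2c1:
  assumes "a \<noteq> 0"
  shows "2 * ftrunc (Suc 0) (a^2) * LR a (cE a (Suc 0)) (1) = 0"
proof -
  note A = assms
  have c0: "cE a (Suc 0) (3) = 0" unfolding cE_def using A by simp
  have c1: "cE a (Suc 0) (2) = alpha a (Suc 0) (2*(Suc 0))"
    unfolding cE_def using A by simp
  have c2: "cE a (Suc 0) (0) = alpha a (Suc 0) (2*(0))"
    unfolding cE_def using A by simp
  have j0: "(0::nat) \<le> Suc 0" using A by simp
  have jj0: "(0::nat) \<le> Suc 0 \<and> a \<noteq> 0" using A by simp
  have j1: "(Suc 0::nat) \<le> Suc 0" using A by simp
  have jj1: "(Suc 0::nat) \<le> Suc 0 \<and> a \<noteq> 0" using A by simp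
  have sh0: "(0::nat) < Suc 0" using A by simp
  have ss0: "SS a (Suc 0) (0) = DD (Suc 0) (0) + 2*a^2 * SS a (Suc 0) (Suc 0)" by (rule SS_shift) (use sh0 in simp)
  have dd0: "DD (Suc 0) (0) = (2*real (0)+5) * DD (Suc 0) (Suc 0)" by (rule DD_shift)
  have pp0: "PP a (Suc 0) (0) = 2*a^2 * PP a (Suc 0) (Suc 0)" by (rule PP_shift) (use sh0 in simp)
  show ?thesis
    unfolding LR_1 c0 c1 c2
    unfolding alpha_even[OF j0] alpha_odd[OF conjunct1[OF jj0] conjunct2[OF jj0]] alpha_even[OF j1] alpha_odd[OF conjunct1[OF jj1] conjunct2[OF jj1]]
    unfolding ss0 dd0 pp0 SS_top DD_top PP_top cco_gg gg_0 gg_Suc0 ftrunc_gg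
    unfolding Bev_def Bov_def Aev_def Aov_def WW_def of_nat_Suc of_nat_add of_nat_mult of_nat_numeral of_nat_1 of_nat_0 power_Suc
    using A by (simp add: field_simps power2_eq_square)
qed

lemma I2d:
  assumes "a \<noteq> 0"
  shows "2 * ftrunc (Suc m) (a^2) * LR a (cE a (Suc m)) (2*m+2) = 0"
proof -
  note A = assms
  have hN: "2 \<le> 2*m+2" using A by simp
  have c0: "cE a (Suc m) (2*m+2+2) = 0" unfolding cE_def using A by simp
  have c1: "cE a (Suc m) (2*m+2+1) = 0" unfolding cE_def using A by simp
  have c2: "cE a (Suc m) (2*m+2-1) = alpha a (Suc m) (2*(m)+1)"
  proof -
    have e: "2*m+2-1 = 2*(m)+1" by simp
    have r: "2*(m)+1 \<le> 2*(Suc m)" using A by simp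
    show ?thesis unfolding e cE_def using r by simp
  qed
  have c3: "cE a (Suc m) (2*m+2-2) = alpha a (Suc m) (2*(m))"
  proof -
    have e: "2*m+2-2 = 2*(m)" by simp
    have r: "2*(m) \<le> 2*(Suc m)" using A by simp
    show ?thesis unfolding e cE_def using r by simp
  qed
  have j0: "(m::nat) \<le> Suc m" using A by simp
  have jj0: "(m::nat) \<le> Suc m \<and> a \<noteq> 0" using A by simp
  have sh0: "(m::nat) < Suc m" using A by simp
  have ss0: "SS a (Suc m) (m) = DD (Suc m) (m) + 2*a^2 * SS a (Suc m) (Suc m)" by (rule SS_shift) (use sh0 in simp)
  have dd0: "DD (Suc m) (m) = (2*real (m)+5) * DD (Suc m) (Suc m)" by (rule DD_shift)
  have pp0: "PP a (Suc m) (m) = 2*a^2 * PP a (Suc m) (Suc m)" by (rule PP_shift) (use sh0 in simp)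
  define K where "K = 2*real m+5"
  have k3: "K \<noteq> 0" unfolding K_def by linarith
  have rk: "real m = (K-5)/2" unfolding K_def by simp
  show ?thesis
    unfolding LR_ge2[OF hN] c0 c1 c2 c3
    unfolding alpha_even[OF j0] alpha_odd[OF conjunct1[OF jj0] conjunct2[OF jj0]]
    unfolding ss0 dd0 pp0 SS_top DD_top PP_top cco_gg  ftrunc_gg
    unfolding Bev_def Bov_def Aev_def Aov_def WW_def of_nat_Suc of_nat_add of_nat_mult of_nat_numeral of_nat_1 of_nat_0 power_Suc rk
    using A k3 by (simp add: field_simps power2_eq_square)
qed

lemma I2e:
  assumes "a \<noteq> 0"
  shows "2 * ftrunc (Suc m) (a^2) * LR a (cE a (Suc m)) (2*m+3) = -8*(real (Suc m)+1)*ftrunc (Suc (Suc m)) (a^2)"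
proof -
  note A = assms
  have hN: "2 \<le> 2*m+3" using A by simp
  have c0: "cE a (Suc m) (2*m+3+2) = 0" unfolding cE_def using A by simp
  have c1: "cE a (Suc m) (2*m+3+1) = 0" unfolding cE_def using A by simp
  have c2: "cE a (Suc m) (2*m+3-1) = alpha a (Suc m) (2*(Suc m))"
  proof -
    have e: "2*m+3-1 = 2*(Suc m)" by simp
    have r: "2*(Suc m) \<le> 2*(Suc m)" using A by simp
    show ?thesis unfolding e cE_def using r by simp
  qed
  have c3: "cE a (Suc m) (2*m+3-2) = alpha a (Suc m) (2*(m)+1)"
  proof -
    have e: "2*m+3-2 = 2*(m)+1" by simp
    have r: "2*(m)+1 \<le> 2*(Suc m)" using A by simp
    show ?thesis unfolding e cE_def using r by simp
  qed
  have j0: "(Suc m::nat) \<le> Suc m" using A by simp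
  have jj0: "(Suc m::nat) \<le> Suc m \<and> a \<noteq> 0" using A by simp
  have j1: "(m::nat) \<le> Suc m" using A by simp
  have jj1: "(m::nat) \<le> Suc m \<and> a \<noteq> 0" using A by simp
  have sh0: "(m::nat) < Suc m" using A by simp
  have ss0: "SS a (Suc m) (m) = DD (Suc m) (m) + 2*a^2 * SS a (Suc m) (Suc m)" by (rule SS_shift) (use sh0 in simp)
  have dd0: "DD (Suc m) (m) = (2*real (m)+5) * DD (Suc m) (Suc m)" by (rule DD_shift)
  have pp0: "PP a (Suc m) (m) = 2*a^2 * PP a (Suc m) (Suc m)" by (rule PP_shift) (use sh0 in simp)
  have gl: "gg a (m) = (2*(real (m)+3+a^2)*gg a (Suc m) - (real (m)+2)*gg a (Suc (Suc m)))/(4*a^2)" by (rule gg_low) (use A in simp)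
  define K where "K = 2*real m+5"
  have k3: "K \<noteq> 0" unfolding K_def by linarith
  have rk: "real m = (K-5)/2" unfolding K_def by simp
  show ?thesis
    unfolding LR_ge2[OF hN] c0 c1 c2 c3
    unfolding alpha_even[OF j0] alpha_odd[OF conjunct1[OF jj0] conjunct2[OF jj0]] alpha_even[OF j1] alpha_odd[OF conjunct1[OF jj1] conjunct2[OF jj1]]
    unfolding ss0 dd0 pp0 SS_top DD_top PP_top cco_gg gl ftrunc_gg
    unfolding Bev_def Bov_def Aev_def Aov_def WW_def of_nat_Suc of_nat_add of_nat_mult of_nat_numeral of_nat_1 of_nat_0 power_Suc rk
    using A k3 by (simp add: field_simps power2_eq_square)
qed

lemma I2e0:
  assumes "a \<noteq> 0"
  shows "2 * ftrunc (0) (a^2) * LR a (cE a (0)) (1) = -8*ftrunc (Suc 0) (a^2)"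
proof -
  note A = assms
  have c0: "cE a (0) (3) = 0" unfolding cE_def using A by simp
  have c1: "cE a (0) (2) = 0" unfolding cE_def using A by simp
  have c2: "cE a (0) (0) = alpha a (0) (2*(0))"
    unfolding cE_def using A by simp
  have j0: "(0::nat) \<le> 0" using A by simp
  have jj0: "(0::nat) \<le> 0 \<and> a \<noteq> 0" using A by simp
  show ?thesis
    unfolding LR_1 c0 c1 c2
    unfolding alpha_even[OF j0] alpha_odd[OF conjunct1[OF jj0] conjunct2[OF jj0]]
    unfolding SS_top DD_top PP_top cco_gg gg_0 gg_Suc0 ftrunc_gg
    unfolding Bev_def Bov_def Aev_def Aov_def WW_def of_nat_Suc of_nat_add of_nat_mult of_nat_numeral of_nat_1 of_nat_0 power_Suc
    using A by (simp add: field_simps power2_eq_square)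
qed

lemma I2f:
  assumes "a \<noteq> 0"
  shows "2 * ftrunc (k) (a^2) * LR a (cE a (k)) (2*k+2) = 8*a*ftrunc k (a^2)"
proof -
  note A = assms
  have hN: "2 \<le> 2*k+2" using A by simp
  have c0: "cE a (k) (2*k+2+2) = 0" unfolding cE_def using A by simp
  have c1: "cE a (k) (2*k+2+1) = 0" unfolding cE_def using A by simp
  have c2: "cE a (k) (2*k+2-1) = 0" unfolding cE_def using A by simp
  have c3: "cE a (k) (2*k+2-2) = alpha a (k) (2*(k))"
  proof -
    have e: "2*k+2-2 = 2*(k)" by simp
    have r: "2*(k) \<le> 2*(k)" using A by simp
    show ?thesis unfolding e cE_def using r by simp
  qed
  have j0: "(k::nat) \<le> k" using A by simp
  have jj0: "(k::nat) \<le> k \<and> a \<noteq> 0" using A by simp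
  define K where "K = 2*real k+3"
  have k3: "K \<noteq> 0" unfolding K_def by linarith
  have rk: "real k = (K-3)/2" unfolding K_def by simp
  show ?thesis
    unfolding LR_ge2[OF hN] c0 c1 c2 c3
    unfolding alpha_even[OF j0] alpha_odd[OF conjunct1[OF jj0] conjunct2[OF jj0]]
    unfolding SS_top DD_top PP_top cco_gg  ftrunc_gg
    unfolding Bev_def Bov_def Aev_def Aov_def WW_def of_nat_Suc of_nat_add of_nat_mult of_nat_numeral of_nat_1 of_nat_0 power_Suc rk
    using A k3 by (simp add: field_simps power2_eq_square)
qed

definition QO :: "real \<Rightarrow> nat \<Rightarrow> nat \<Rightarrow> real" where
  "QO a k n = (if n = 2*k+3 then 4*a*ftrunc k (a^2)
     else if n = 2*k+2 then -(4*real k+10)*ftrunc k (a^2)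
     else if n = 2*k+1 then -2*a*(2*real k+2)*ftrunc (Suc k) (a^2)
     else if n = 2*k then (2*real k+2)*(2*real k+1)*ftrunc (Suc k) (a^2)
     else 0)"

definition QE :: "real \<Rightarrow> nat \<Rightarrow> nat \<Rightarrow> real" where
  "QE a k n = (if n = 2*k+2 then 8*a*ftrunc k (a^2)
     else if n = 2*k+1 then -8*(real k+1)*ftrunc (Suc k) (a^2)
     else 0)"

lemma even_cases: "even (n::nat) \<Longrightarrow> n = 0 \<or> (\<exists>m. n = 2*m+2)"
proof -
  assume "even n"
  then obtain q where q: "n = 2*q" by (meson evenE)
  show ?thesis
  proof (cases q)
    case 0 then show ?thesis using q by simp
  next
    case (Suc m) then show ?thesis using q by auto
  qed
qed
lemma odd_cases: "odd (n::nat) \<Longrightarrow> n = 1 \<or> (\<exists>m. n = 2*m+3)"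
proof -
  assume "odd n"
  then obtain q where q: "n = 2*q+1" by (meson oddE)
  show ?thesis
  proof (cases q)
    case 0 then show ?thesis using q by simp
  next
    case (Suc m) then show ?thesis using q by auto
  qed
qed

lemma R1:
  assumes "a \<noteq> 0"
  shows "ftrunc k (a^2) * LR a (cO a k) n = QO a k n"
proof -
  consider (big) "2*k+4 \<le> n" | (f) "n = 2*k+3" | (e) "n = 2*k+2" | (d) "n = 2*k+1" | (c) "n = 2*k" | (low) "n < 2*k"
    by linarith
  then show ?thesis
  proof cases
    case big
    have h2: "2 \<le> n" using big by simp
    have z: "cO a k (n+2) = 0" "cO a k (n+1) = 0" "cO a k (n-1) = 0" "cO a k (n-2) = 0"
      using big by (simp_all add: cO_def)
    have "LR a (cO a k) n = 0" unfolding LR_ge2[OF h2] z by simp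
    then show ?thesis using big by (simp add: QO_def)
  next
    case f then show ?thesis using I1f[OF assms, of k] by (simp add: QO_def)
  next
    case e then show ?thesis using I1e[OF assms, of k] by (simp add: QO_def)
  next
    case d
    show ?thesis
    proof (cases k)
      case 0 then show ?thesis using d I1d0[OF assms] by (simp add: QO_def)
    next
      case (Suc m)
      have n: "n = 2*m+3" using d Suc by simp
      show ?thesis using I1d[OF assms, of m] unfolding n Suc by (simp add: QO_def)
    qed
  next
    case c
    show ?thesis
    proof (cases k)
      case 0 then show ?thesis using c I1c0[OF assms] by (simp add: QO_def)
    next
      case (Suc m)
      have n: "n = 2*m+2" using c Suc by simp
      show ?thesis using I1c[OF assms, of m] unfolding n Suc by (simp add: QO_def)
    qed
  next
    case low
    have q0: "QO a k n = 0" using low by (simp add: QO_def)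
    show ?thesis
    proof (cases "even n")
      case True
      then consider "n = 0" | m where "n = 2*m+2" using even_cases by blast
      then show ?thesis
      proof cases
        case 1
        then show ?thesis using I1a0[of k a] assms low q0 by simp
      next
        case 2
        have "Suc (Suc m) \<le> k" using 2 low by simp
        then show ?thesis using I1a[of m k a] assms q0 unfolding 2 by simp
      qed
    next
      case False
      then consider "n = 1" | m where "n = 2*m+3" using odd_cases by blast
      then show ?thesis
      proof cases
        case 1
        then show ?thesis using I1b0[of k a] assms low q0 by simp
      next
        case 2
        have "Suc (Suc m) \<le> k" using 2 low by simp
        then show ?thesis using I1b[of m k a] assms q0 unfolding 2 by simp
      qed
    qed
  qed
qed

lemma R2:
  assumes "a \<noteq> 0"
  shows "2 * ftrunc k (a^2) * LR a (cE a k) n = QE a k n"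
proof -
  consider (big) "2*k+3 \<le> n" | (f) "n = 2*k+2" | (e) "n = 2*k+1" | (d) "n = 2*k" | (c) "n + 1 = 2*k" | (low) "n + 1 < 2*k"
    by linarith
  then show ?thesis
  proof cases
    case big
    have h2: "2 \<le> n" using big by simp
    have z: "cE a k (n+2) = 0" "cE a k (n+1) = 0" "cE a k (n-1) = 0" "cE a k (n-2) = 0"
      using big by (simp_all add: cE_def)
    have "LR a (cE a k) n = 0" unfolding LR_ge2[OF h2] z by simp
    then show ?thesis using big by (simp add: QE_def)
  next
    case f then show ?thesis using I2f[OF assms, of k] by (simp add: QE_def)
  next
    case e
    show ?thesis
    proof (cases k)
      case 0 then show ?thesis using e I2e0[OF assms] by (simp add: QE_def)
    next
      case (Suc m)
      have n: "n = 2*m+3" using e Suc by simp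
      show ?thesis using I2e[OF assms, of m] unfolding n Suc by (simp add: QE_def)
    qed
  next
    case d
    show ?thesis
    proof (cases k)
      case 0
      then have "LR a (cE a k) n = 0" using d by (simp add: LR_0 cE_def)
      then show ?thesis using d 0 by (simp add: QE_def)
    next
      case (Suc m)
      have n: "n = 2*m+2" using d Suc by simp
      show ?thesis using I2d[OF assms, of m] unfolding n Suc by (simp add: QE_def)
    qed
  next
    case c
    then obtain k1 where k1: "k = Suc k1" by (cases k) auto
    show ?thesis
    proof (cases k1)
      case 0 then show ?thesis using c k1 I2c1[OF assms] by (simp add: QE_def)
    next
      case (Suc m)
      have n: "n = 2*m+3" using c k1 Suc by simp
      show ?thesis using I2c[OF assms, of m] unfolding n k1 Suc by (simp add: QE_def)
    qed
  next
    case low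
    have q0: "QE a k n = 0" using low by (simp add: QE_def)
    show ?thesis
    proof (cases "even n")
      case True
      then consider "n = 0" | m where "n = 2*m+2" using even_cases by blast
      then show ?thesis
      proof cases
        case 1
        then show ?thesis using I2a0[of k a] assms low q0 by simp
      next
        case 2
        have "Suc (Suc m) \<le> k" using 2 low by simp
        then show ?thesis using I2a[of m k a] assms q0 unfolding 2 by simp
      qed
    next
      case False
      then consider "n = 1" | m where "n = 2*m+3" using odd_cases by blast
      then show ?thesis
      proof cases
        case 1
        then show ?thesis using I2b0[of k a] assms low q0 by simp
      next
        case 2
        have "Suc (Suc (Suc m)) \<le> k" using 2 low by simp
        then show ?thesis using I2b[of m k a] assms q0 unfolding 2 by simp
      qed
    qed
  qed
qed

definition Lc :: "real \<Rightarrow> complex poly \<Rightarrow> complex poly" where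
  "Lc a p = [:-of_real a, 1:] * pderiv (pderiv p) + [:of_real (4+2*a^2), 0, -2:] * pderiv p
     + [:0, -of_real (4*a^2+8), of_real (4*a):] * p"

lemma poly_Lc: "poly (Lc a p) z = (z - of_real a) * poly (pderiv (pderiv p)) z
   + (of_real (4+2*a^2) - 2*z^2) * poly (pderiv p) z + (of_real (4*a)*z^2 - of_real (4*a^2+8)*z) * poly p z"
  by (simp add: Lc_def algebra_simps power2_eq_square)

lemma Lc_add: "Lc a (p+q) = Lc a p + Lc a q"
  by (simp only: Lc_def pderiv_add distrib_left add_ac)
lemma Lc_smult: "Lc a (smult c p) = smult c (Lc a p)"
  by (simp only: Lc_def pderiv_smult mult_smult_right smult_add_right)
lemma Lc_0: "Lc a 0 = 0" by (simp add: Lc_def)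
lemma Lc_sum: "Lc a (sum f A) = (\<Sum>x\<in>A. Lc a (f x))"
  by (induction A rule: infinite_finite_induct) (auto simp: Lc_add Lc_0)

lemma coeff_lin: "coeff ([:u, v:] * q) n = u * coeff q n + (if n = 0 then 0 else v * coeff q (n - 1))"
  by (cases n) (simp_all add: coeff_pCons)
lemma coeff_quad: "coeff ([:u, v, w:] * q) n = u * coeff q n + (if n = 0 then 0 else v * coeff q (n - 1))
   + (if n \<le> 1 then 0 else w * coeff q (n - 2))"
proof (cases n)
  case 0 then show ?thesis by simp
next
  case (Suc m) then show ?thesis by (cases m) (simp_all add: coeff_pCons add.assoc)
qed

lemma coeff_Lc:
  assumes "\<And>i. coeff p i = of_real (c i)"
  shows "coeff (Lc a p) n = of_real (LR a c n)"
proof -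
  have "coeff (Lc a p) n = - of_real a * coeff (pderiv (pderiv p)) n + (if n = 0 then 0 else coeff (pderiv (pderiv p)) (n-1))
     + of_real (4+2*a^2) * coeff (pderiv p) n + (if n \<le> 1 then 0 else -2 * coeff (pderiv p) (n-2))
     + (if n = 0 then 0 else - of_real (4*a^2+8) * coeff p (n-1)) + (if n \<le> 1 then 0 else of_real (4*a) * coeff p (n-2))"
    unfolding Lc_def coeff_add coeff_lin coeff_quad by simp
  also have "\<dots> = of_real (LR a c n)"
  proof (cases "n \<le> 1")
    case True
    then consider "n = 0" | "n = 1" by linarith
    then show ?thesis
    proof cases
      case 1 then show ?thesis unfolding 1 LR_0 by (simp add: coeff_pderiv assms algebra_simps numeral_2_eq_2)
    next
      case 2 then show ?thesis unfolding 2 LR_1 by (simp add: coeff_pderiv assms algebra_simps numeral_eq_Suc)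
    qed
  next
    case False
    define m where "m = n - 2"
    have m: "n = Suc (Suc m)" using False unfolding m_def by simp
    show ?thesis unfolding m LR_ge2[OF le_add1[of 2 m, unfolded add_2_eq_Suc]]
      by (simp add: coeff_pderiv assms algebra_simps)
  qed
  finally show ?thesis .
qed

definition pOc :: "real \<Rightarrow> nat \<Rightarrow> complex poly" where
  "pOc a k = (\<Sum>i\<le>2*k+1. monom (of_real (beta a k i)) i)"
definition pEc :: "real \<Rightarrow> nat \<Rightarrow> complex poly" where
  "pEc a k = (\<Sum>i\<le>2*k. monom (of_real (alpha a k i)) i)"

lemma coeff_pOc: "coeff (pOc a k) i = of_real (cO a k i)"
  unfolding pOc_def coeff_sum coeff_monom cO_def by (simp add: sum.delta)
lemma coeff_pEc: "coeff (pEc a k) i = of_real (cE a k i)"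
  unfolding pEc_def coeff_sum coeff_monom cE_def by (simp add: sum.delta)
lemma poly_pOc: "poly (pOc a k) z = qodd a k z"
  unfolding pOc_def qodd_def poly_sum poly_monom ..
lemma poly_pEc: "poly (pEc a k) z = qeven a k z"
  unfolding pEc_def qeven_def poly_sum poly_monom ..

definition QOc :: "real \<Rightarrow> nat \<Rightarrow> complex poly" where
  "QOc a k = monom (of_real (4*a*ftrunc k (a^2))) (2*k+3) + monom (of_real (-(4*real k+10)*ftrunc k (a^2))) (2*k+2)
     + monom (of_real (-2*a*(2*real k+2)*ftrunc (Suc k) (a^2))) (2*k+1)
     + monom (of_real ((2*real k+2)*(2*real k+1)*ftrunc (Suc k) (a^2))) (2*k)"
definition QEc :: "real \<Rightarrow> nat \<Rightarrow> complex poly" where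
  "QEc a k = monom (of_real (8*a*ftrunc k (a^2))) (2*k+2) + monom (of_real (-8*(real k+1)*ftrunc (Suc k) (a^2))) (2*k+1)"

lemma coeff_QOc: "coeff (QOc a k) n = of_real (QO a k n)"
  unfolding QOc_def QO_def by auto
lemma coeff_QEc: "coeff (QEc a k) n = of_real (QE a k n)"
  unfolding QEc_def QE_def by auto

lemma LcO: "a \<noteq> 0 \<Longrightarrow> smult (of_real (ftrunc k (a^2))) (Lc a (pOc a k)) = QOc a k"
  by (rule poly_eqI) (simp add: coeff_Lc[OF coeff_pOc] coeff_QOc R1 flip: of_real_mult)
lemma LcE: "a \<noteq> 0 \<Longrightarrow> smult (of_real (2 * ftrunc k (a^2))) (Lc a (pEc a k)) = QEc a k"
  by (rule poly_eqI) (simp add: coeff_Lc[OF coeff_pEc] coeff_QEc R2[simplified] flip: of_real_mult)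

lemma poly_LcO: "a \<noteq> 0 \<Longrightarrow> poly (Lc a (pOc a k)) z = poly (QOc a k) z / of_real (ftrunc k (a^2))"
proof -
  assume a: "a \<noteq> 0"
  have f: "ftrunc k (a^2) \<noteq> 0" using ftrunc_ge1[of "a^2" k] by simp
  have "poly (smult (of_real (ftrunc k (a^2))) (Lc a (pOc a k))) z = poly (QOc a k) z" using LcO[OF a] by simp
  then show ?thesis using f by (simp add: field_simps)
qed
lemma poly_LcE: "a \<noteq> 0 \<Longrightarrow> poly (Lc a (pEc a k)) z = poly (QEc a k) z / (2 * of_real (ftrunc k (a^2)))"
proof -
  assume a: "a \<noteq> 0"
  have f: "ftrunc k (a^2) \<noteq> 0" using ftrunc_ge1[of "a^2" k] by simp
  have "poly (smult (of_real (2 * ftrunc k (a^2))) (Lc a (pEc a k))) z = poly (QEc a k) z" using LcE[OF a] by simp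
  then show ?thesis using f by (simp add: field_simps)
qed

lemma deriv_ep:
  fixes C c :: complex
  shows "deriv (\<lambda>\<zeta>. C * (exp (c*\<zeta>) * poly R \<zeta>)) = (\<lambda>\<zeta>. C * (exp (c*\<zeta>) * poly (smult c R + pderiv R) \<zeta>))"
proof
  fix \<zeta> :: complex
  have "((\<lambda>\<zeta>. C * (exp (c*\<zeta>) * poly R \<zeta>)) has_field_derivative C * (exp (c*\<zeta>) * poly (smult c R + pderiv R) \<zeta>)) (at \<zeta>)"
    by (auto intro!: derivative_eq_intros simp: algebra_simps)
  then show "deriv (\<lambda>\<zeta>. C * (exp (c*\<zeta>) * poly R \<zeta>)) \<zeta> = C * (exp (c*\<zeta>) * poly (smult c R + pderiv R) \<zeta>)"
    by (rule DERIV_imp_deriv)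
qed

lemma Dop_ep:
  fixes C c :: complex
  shows "Dop a (\<lambda>\<zeta>. C * (exp (c*\<zeta>) * poly R \<zeta>)) z =
   C * exp (c*z) * ((z - of_real a) * poly (smult c (smult c R + pderiv R) + pderiv (smult c R + pderiv R)) z
     - (2*(z - of_real a)^2 + 2) * poly (smult c R + pderiv R) z - 2*(z - of_real a) * poly R z)"
  unfolding Dop_def deriv_ep by (simp add: algebra_simps)

definition Uc :: "real \<Rightarrow> complex poly" where
  "Uc a = pCons (- (of_real a ^ 3)) (pCons (3 * of_real a ^ 2) (pCons (-3 * of_real a) (pCons 1 0)))"

lemma poly_Uc: "poly (Uc a) z = (z - of_real a)^3"
  by (simp add: Uc_def algebra_simps power2_eq_square power3_eq_cube)
lemma poly_Uc1: "poly (pderiv (Uc a)) z = 3*(z - of_real a)^2"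
  by (simp add: Uc_def pderiv_pCons algebra_simps power2_eq_square)
lemma poly_Uc2: "poly (pderiv (pderiv (Uc a))) z = 6*(z - of_real a)"
  by (simp add: Uc_def pderiv_pCons algebra_simps)

lemma bracket:
  "(z - of_real a) * poly (smult (-2* of_real a) (smult (-2* of_real a) (Uc a * P) + pderiv (Uc a * P)) + pderiv (smult (-2* of_real a) (Uc a * P) + pderiv (Uc a * P))) z
     - (2*(z - of_real a)^2 + 2) * poly (smult (-2* of_real a) (Uc a * P) + pderiv (Uc a * P)) z - 2*(z - of_real a) * poly (Uc a * P) z
   = (z - of_real a)^3 * poly (Lc a P) z"
proof -
  define U where "U = Uc a"
  have d1: "pderiv (U * P) = U * pderiv P + P * pderiv U" by (rule pderiv_mult)
  have d2: "pderiv (pderiv (U * P)) = U * pderiv (pderiv P) + (pderiv U * pderiv P + pderiv U * pderiv P) + P * pderiv (pderiv U)"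
    unfolding d1 pderiv_add pderiv_mult by (simp add: algebra_simps)
  define u where "u = z - of_real a"
  define p0 where "p0 = poly P z"
  define p1 where "p1 = poly (pderiv P) z"
  define p2 where "p2 = poly (pderiv (pderiv P)) z"
  have e0: "poly U z = u^3" unfolding U_def u_def by (rule poly_Uc)
  have e1: "poly (pderiv U) z = 3*u^2" unfolding U_def u_def by (rule poly_Uc1)
  have e2: "poly (pderiv (pderiv U)) z = 6*u" unfolding U_def u_def by (rule poly_Uc2)
  have zz: "z = u + of_real a" unfolding u_def by simp
  show ?thesis
    unfolding U_def[symmetric] poly_Lc pderiv_add pderiv_smult
    unfolding d2
    unfolding d1
    apply (simp only: poly_add poly_smult poly_mult e0 e1 e2 u_def[symmetric] p0_def[symmetric] p1_def[symmetric] p2_def[symmetric])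
    unfolding zz of_real_add of_real_mult of_real_numeral of_real_power
    by algebra
qed

lemma etrunc_Suc_c: "etrunc (Suc j) x = etrunc j x + x^(Suc j) / of_nat (fact (Suc j))"
  unfolding etrunc_def sum.atMost_Suc ..

lemma DERIV_etr:
  fixes c z :: complex
  shows "((\<lambda>\<zeta>. etrunc (Suc n) (2 * \<zeta> * c)) has_field_derivative (2 * c * etrunc n (2 * z * c))) (at z)"
proof (induction n)
  case 0
  have e: "\<And>y::complex. etrunc (Suc 0) y = 1 + y" by (simp add: etrunc_def)
  show ?case unfolding e by (auto intro!: derivative_eq_intros simp: etrunc_def)
next
  case (Suc n)
  have f: "of_nat (fact (Suc (Suc n))) = (of_nat (Suc (Suc n)) :: complex) * of_nat (fact (Suc n))"
    by (simp only: fact_Suc[of "Suc n"] of_nat_mult of_nat_id)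
  have nz1: "(of_nat (Suc (Suc n)) :: complex) \<noteq> 0" by (simp only: of_nat_eq_0_iff)
  have nz2: "(of_nat (fact (Suc n)) :: complex) \<noteq> 0" by (simp only: of_nat_eq_0_iff fact_nonzero not_False_eq_True)
  note nz = nz1 nz2
  have d: "((\<lambda>\<zeta>. (2 * \<zeta> * c)^(Suc (Suc n)) / of_nat (fact (Suc (Suc n)))) has_field_derivative
       (2 * c * ((2 * z * c)^(Suc n) / of_nat (fact (Suc n))))) (at z)"
  proof -
    have l: "((\<lambda>\<zeta>. 2 * \<zeta> * c) has_field_derivative 2 * c) (at z)"
      by (auto intro!: derivative_eq_intros)
    have "((\<lambda>\<zeta>. (2 * \<zeta> * c)^(Suc (Suc n)) / of_nat (fact (Suc (Suc n)))) has_field_derivative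
       ((1 + of_nat (Suc n)) * (2 * c * (2 * z * c) ^ Suc n)) / of_nat (fact (Suc (Suc n)))) (at z)"
      by (rule DERIV_cdivide[OF DERIV_power_Suc[OF l]])
    also have "((1 + of_nat (Suc n)) * (2 * c * (2 * z * c) ^ Suc n)) / of_nat (fact (Suc (Suc n)))
        = 2 * c * ((2 * z * c)^(Suc n) / of_nat (fact (Suc n)))"
    proof -
      have "(1 + of_nat (Suc n) :: complex) = of_nat (Suc (Suc n))" by simp
      moreover have "\<And>M A X F :: complex. M \<noteq> 0 \<Longrightarrow> M * (A * X) / (M * F) = A * (X / F)"
        by simp
      ultimately show ?thesis unfolding f using nz by simp
    qed
    finally show ?thesis .
  qed
  have "((\<lambda>\<zeta>. etrunc (Suc n) (2 * \<zeta> * c) + (2 * \<zeta> * c)^(Suc (Suc n)) / of_nat (fact (Suc (Suc n)))) has_field_derivative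
       (2 * c * etrunc n (2 * z * c) + 2 * c * ((2 * z * c)^(Suc n) / of_nat (fact (Suc n))))) (at z)"
    by (rule DERIV_add[OF Suc.IH d])
  then show ?case unfolding etrunc_Suc_c[of "Suc n"] etrunc_Suc_c[of n "2 * z * c"] by (simp add: algebra_simps)
qed

lemma deriv_expH:
  fixes H :: "complex \<Rightarrow> complex"
  assumes "(H has_field_derivative H') (at z)"
  shows "deriv (\<lambda>\<zeta>. exp (-2*\<zeta>* of_real a) * H \<zeta>) z = exp (-2*z* of_real a) * (H' - 2* of_real a * H z)"
proof -
  have "((\<lambda>\<zeta>. exp (-2*\<zeta>* of_real a) * H \<zeta>) has_field_derivative exp (-2*z* of_real a) * (H' - 2* of_real a * H z)) (at z)"
    by (auto intro!: derivative_eq_intros assms simp: algebra_simps)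
  then show ?thesis by (rule DERIV_imp_deriv)
qed

definition T1 :: "real \<Rightarrow> nat \<Rightarrow> complex \<Rightarrow> complex" where
  "T1 a k \<zeta> = 4 * of_real (ftrunc k (a^2)) * of_real (fact (2*k+2))
                       * etrunc (2*k+2) (2 * \<zeta> * of_real a) / (2 * of_real a) ^ (2*k+3)
                    + of_nat (2*k+2) * of_real (ftrunc (k+1) (a^2)) * \<zeta> ^ (2*k+1)
                    - 2 * of_real (ftrunc k (a^2)) * \<zeta> ^ (2*k+3)"

definition C1 :: "real \<Rightarrow> nat \<Rightarrow> complex" where
  "C1 a k = 4 * of_real (ftrunc k (a^2)) * of_real (fact (2*k+2)) / (2 * of_real a) ^ (2*k+3)"

definition T1d :: "real \<Rightarrow> nat \<Rightarrow> complex \<Rightarrow> complex" where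
  "T1d a k z = C1 a k * (2 * of_real a * etrunc (2*k+1) (2 * z * of_real a))
                    + of_nat (2*k+2) * of_real (ftrunc (k+1) (a^2)) * (of_nat (2*k+1) * (1 * z ^ (2*k+1 - Suc 0)))
                    - 2 * of_real (ftrunc k (a^2)) * (of_nat (2*k+3) * (1 * z ^ (2*k+3 - Suc 0)))"

lemma T1_alt: "T1 a k = (\<lambda>\<zeta>. C1 a k * etrunc (Suc (2*k+1)) (2 * \<zeta> * of_real a)
                    + of_nat (2*k+2) * of_real (ftrunc (k+1) (a^2)) * \<zeta> ^ (2*k+1)
                    - 2 * of_real (ftrunc k (a^2)) * \<zeta> ^ (2*k+3))"
proof
  fix \<zeta>
  have e: "Suc (2*k+1) = 2*k+2" by simp
  show "T1 a k \<zeta> = C1 a k * etrunc (Suc (2*k+1)) (2 * \<zeta> * of_real a)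
                    + of_nat (2*k+2) * of_real (ftrunc (k+1) (a^2)) * \<zeta> ^ (2*k+1)
                    - 2 * of_real (ftrunc k (a^2)) * \<zeta> ^ (2*k+3)"
    unfolding T1_def C1_def e by simp
qed

lemma T1_deriv: "(T1 a k has_field_derivative T1d a k z) (at z)"
proof -
  have d: "((\<lambda>\<zeta>. etrunc (Suc (2*k+1)) (2 * \<zeta> * of_real a)) has_field_derivative (2 * of_real a * etrunc (2*k+1) (2 * z * of_real a))) (at z)"
    by (rule DERIV_etr)
  show ?thesis unfolding T1_alt T1d_def
    by (intro DERIV_diff DERIV_add DERIV_cmult d DERIV_power DERIV_ident)
qed

lemma etr_diff: "etrunc (2*k+1) y - etrunc (2*k+2) (y::complex) = - (y^(2*k+2) / of_nat (fact (2*k+2)))"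
proof -
  have e: "2*k+2 = Suc (2*k+1)" by simp
  show ?thesis unfolding e etrunc_Suc_c by simp
qed

lemma key_pow:
  fixes A z F :: complex
  assumes "A \<noteq> 0" "F \<noteq> 0"
  shows "2 * A * (F / (2 * A) ^ (2*k+3)) * ((2 * z * A)^(2*k+2) / F) = z^(2*k+2)"
proof -
  have p1: "(2 * z * A)^(2*k+2) = (2*A)^(2*k+2) * z^(2*k+2)" by (simp add: power_mult_distrib mult_ac)
  have p2: "(2 * A)^(2*k+3) = (2*A) * (2*A)^(2*k+2)" by (simp add: numeral_eq_Suc)
  have nz: "(2*A)^(2*k+2) \<noteq> 0" "2*A \<noteq> 0" using assms by simp_all
  show ?thesis unfolding p1 p2 using nz assms(2) by (simp add: field_simps)
qed

lemma T1_eq: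
  assumes "a \<noteq> 0"
  shows "T1d a k z - 2 * of_real a * T1 a k z = poly (QOc a k) z"
proof -
  define A where "A = (of_real a :: complex)"
  define F where "F = (of_real (fact (2*k+2)) :: complex)"
  define f0 where "f0 = (of_real (ftrunc k (a^2)) :: complex)"
  define f1 where "f1 = (of_real (ftrunc (k+1) (a^2)) :: complex)"
  have A0: "A \<noteq> 0" using assms by (simp add: A_def)
  have F0: "F \<noteq> 0" unfolding F_def of_real_eq_0_iff by (rule fact_nonzero)
  have FF: "of_nat (fact (2*k+2)) = F" unfolding F_def of_real_fact of_nat_fact ..
  have kp: "2 * A * (F / (2 * A) ^ (2*k+3)) * ((2 * z * A)^(2*k+2) / F) = z^(2*k+2)" by (rule key_pow[OF A0 F0])
  have c1: "C1 a k = 4 * f0 * (F / (2 * A) ^ (2*k+3))" unfolding C1_def f0_def F_def A_def by simp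
  have ex: "2*k+1 - Suc 0 = 2*k" "2*k+3 - Suc 0 = 2*k+2" by simp_all
  have t1: "T1 a k z = C1 a k * etrunc (2*k+2) (2 * z * A)
                    + of_nat (2*k+2) * f1 * z ^ (2*k+1) - 2 * f0 * z ^ (2*k+3)"
    unfolding T1_def C1_def f0_def f1_def A_def F_def by simp
  have "T1d a k z - 2 * of_real a * T1 a k z
      = 4 * f0 * (2 * A * (F / (2 * A) ^ (2*k+3)) * (etrunc (2*k+1) (2 * z * A) - etrunc (2*k+2) (2 * z * A)))
        + of_nat (2*k+2) * f1 * (of_nat (2*k+1) * z ^ (2*k)) - 2 * f0 * (of_nat (2*k+3) * z ^ (2*k+2))
        - 2 * A * (of_nat (2*k+2) * f1 * z ^ (2*k+1) - 2 * f0 * z ^ (2*k+3))"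
    unfolding t1 T1d_def ex A_def[symmetric] f0_def[symmetric] f1_def[symmetric] c1
    by (simp add: algebra_simps diff_divide_distrib)
  also have "\<dots> = - 4 * f0 * z^(2*k+2)
        + of_nat (2*k+2) * f1 * (of_nat (2*k+1) * z ^ (2*k)) - 2 * f0 * (of_nat (2*k+3) * z ^ (2*k+2))
        - 2 * A * (of_nat (2*k+2) * f1 * z ^ (2*k+1) - 2 * f0 * z ^ (2*k+3))"
  proof -
    have "2 * A * (F / (2 * A) ^ (2*k+3)) * (etrunc (2*k+1) (2 * z * A) - etrunc (2*k+2) (2 * z * A)) = - (z^(2*k+2))"
      unfolding etr_diff FF using kp by simp
    then show ?thesis by simp
  qed
  also have "\<dots> = poly (QOc a k) z"
    unfolding QOc_def poly_add poly_monom A_def f0_def f1_def by (simp add: algebra_simps)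
  finally show ?thesis .
qed

definition C2 :: "real \<Rightarrow> nat \<Rightarrow> complex" where
  "C2 a k = 8 * of_real (fact (2*k+2)) * of_real a * of_real (etrunc (k+1) (a^2)) / (2 * of_real a) ^ (2*k+3)"

definition T2 :: "real \<Rightarrow> nat \<Rightarrow> complex \<Rightarrow> complex" where
  "T2 a k \<zeta> = 8 * of_real (fact (2*k+2)) * of_real a * of_real (etrunc (k+1) (a^2))
                       / (2 * of_real a) ^ (2*k+3) * etrunc (2*k+2) (2 * \<zeta> * of_real a)
                    - 4 * of_real (ftrunc (k+1) (a^2)) * \<zeta> ^ (2*k+2)"

definition T2d :: "real \<Rightarrow> nat \<Rightarrow> complex \<Rightarrow> complex" where
  "T2d a k z = C2 a k * (2 * of_real a * etrunc (2*k+1) (2 * z * of_real a))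
                    - 4 * of_real (ftrunc (k+1) (a^2)) * (of_nat (2*k+2) * (1 * z ^ (2*k+2 - Suc 0)))"

lemma T2_alt: "T2 a k = (\<lambda>\<zeta>. C2 a k * etrunc (Suc (2*k+1)) (2 * \<zeta> * of_real a)
                    - 4 * of_real (ftrunc (k+1) (a^2)) * \<zeta> ^ (2*k+2))"
proof
  fix \<zeta>
  have e: "Suc (2*k+1) = 2*k+2" by simp
  show "T2 a k \<zeta> = C2 a k * etrunc (Suc (2*k+1)) (2 * \<zeta> * of_real a)
                    - 4 * of_real (ftrunc (k+1) (a^2)) * \<zeta> ^ (2*k+2)"
    unfolding T2_def C2_def e by simp
qed

lemma T2_deriv: "(T2 a k has_field_derivative T2d a k z) (at z)"
proof -
  have d: "((\<lambda>\<zeta>. etrunc (Suc (2*k+1)) (2 * \<zeta> * of_real a)) has_field_derivative (2 * of_real a * etrunc (2*k+1) (2 * z * of_real a))) (at z)"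
    by (rule DERIV_etr)
  show ?thesis unfolding T2_alt T2d_def
    by (intro DERIV_diff DERIV_add DERIV_cmult d DERIV_power DERIV_ident)
qed

lemma T2_eq:
  assumes "a \<noteq> 0"
  shows "T2d a k z - 2 * of_real a * T2 a k z = poly (QEc a k) z"
proof -
  define A where "A = (of_real a :: complex)"
  define F where "F = (of_real (fact (2*k+2)) :: complex)"
  define f0 where "f0 = (of_real (ftrunc k (a^2)) :: complex)"
  define f1 where "f1 = (of_real (ftrunc (k+1) (a^2)) :: complex)"
  define E where "E = (of_real (etrunc (k+1) (a^2)) :: complex)"
  have A0: "A \<noteq> 0" using assms by (simp add: A_def)
  have F0: "F \<noteq> 0" unfolding F_def of_real_eq_0_iff by (rule fact_nonzero)
  have FF: "of_nat (fact (2*k+2)) = F" unfolding F_def of_real_fact of_nat_fact ..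
  have kp: "2 * A * (F / (2 * A) ^ (2*k+3)) * ((2 * z * A)^(2*k+2) / F) = z^(2*k+2)" by (rule key_pow[OF A0 F0])
  have c2: "C2 a k = 8 * A * E * (F / (2 * A) ^ (2*k+3))" unfolding C2_def E_def F_def A_def by simp
  have fE: "E = f1 - f0" unfolding f1_def f0_def E_def using ftrunc_Suc[of k "a^2"] by simp
  have ex: "2*k+2 - Suc 0 = 2*k+1" by simp
  have t2: "T2 a k z = C2 a k * etrunc (2*k+2) (2 * z * A) - 4 * f1 * z ^ (2*k+2)"
    unfolding T2_def C2_def f1_def A_def by simp
  have "T2d a k z - 2 * of_real a * T2 a k z
      = 8 * A * E * (2 * A * (F / (2 * A) ^ (2*k+3)) * (etrunc (2*k+1) (2 * z * A) - etrunc (2*k+2) (2 * z * A)))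
        - 4 * f1 * (of_nat (2*k+2) * z ^ (2*k+1)) + 2 * A * (4 * f1 * z ^ (2*k+2))"
    unfolding t2 T2d_def ex A_def[symmetric] f1_def[symmetric] c2
    by (simp add: algebra_simps diff_divide_distrib)
  also have "\<dots> = - 8 * A * E * z^(2*k+2) - 4 * f1 * (of_nat (2*k+2) * z ^ (2*k+1)) + 2 * A * (4 * f1 * z ^ (2*k+2))"
  proof -
    have "2 * A * (F / (2 * A) ^ (2*k+3)) * (etrunc (2*k+1) (2 * z * A) - etrunc (2*k+2) (2 * z * A)) = - (z^(2*k+2))"
      unfolding etr_diff FF using kp by simp
    then show ?thesis by simp
  qed
  also have "\<dots> = poly (QEc a k) z"
    unfolding QEc_def poly_add poly_monom fE unfolding A_def f0_def f1_def E_def by (simp add: algebra_simps)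
  finally show ?thesis .
qed

lemma coef_gen:
  assumes "a \<noteq> 0"
  shows "of_real (rpre a k) * of_real (ftrunc k (a^2)) = (of_real (fact (2*k+2)) * of_real (ftrunc (k+1) (a^2)) / 2^(2*k+2) :: complex)"
proof -
  have f: "ftrunc k (a^2) \<noteq> 0" using ftrunc_ge1[of "a^2" k] by simp
  have "rpre a k * ftrunc k (a^2) = fact (2*k+2) * ftrunc (k+1) (a^2) / 2^(2*k+2)"
    unfolding rpre_def using f by (simp add: field_simps)
  then have "(of_real (rpre a k * ftrunc k (a^2)) :: complex) = of_real (fact (2*k+2) * ftrunc (k+1) (a^2) / 2^(2*k+2))"
    by simp
  then show ?thesis by simp
qed

lemma nz_facts:
  assumes "a \<noteq> 0"
  shows "(of_real (ftrunc k (a^2)) :: complex) \<noteq> 0" "(of_real (ftrunc (k+1) (a^2)) :: complex) \<noteq> 0"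
        "(of_real (fact (2*k+2)) :: complex) \<noteq> 0" "(of_real (rpre a k) :: complex) \<noteq> 0"
proof -
  have f0: "ftrunc k (a^2) \<noteq> 0" using ftrunc_ge1[of "a^2" k] by simp
  have f1: "ftrunc (k+1) (a^2) \<noteq> 0" using ftrunc_ge1[of "a^2" "k+1"] by simp
  show "(of_real (ftrunc k (a^2)) :: complex) \<noteq> 0" using f0 by simp
  show "(of_real (ftrunc (k+1) (a^2)) :: complex) \<noteq> 0" using f1 by simp
  show "(of_real (fact (2*k+2)) :: complex) \<noteq> 0" unfolding of_real_eq_0_iff by (rule fact_nonzero)
  have "rpre a k \<noteq> 0" unfolding rpre_def using f0 f1 by (simp del: fact_Suc)
  then show "(of_real (rpre a k) :: complex) \<noteq> 0" by simp
qed

lemma coef1: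
  assumes "a \<noteq> 0"
  shows "8 * (q / of_real (rpre a k) * (Q / of_real (ftrunc k (a^2))))
       = 2 ^ (2*k+5) * q / (of_real (fact (2*k+2)) * of_real (ftrunc (k+1) (a^2))) * (Q :: complex)"
proof -
  note nz = nz_facts[OF assms, of k]
  have c: "of_real (rpre a k) * of_real (ftrunc k (a^2)) = (of_real (fact (2*k+2)) * of_real (ftrunc (k+1) (a^2)) / 2^(2*k+2) :: complex)"
    by (rule coef_gen[OF assms])
  have p: "(2::complex) ^ (2*k+5) = 8 * 2^(2*k+2)" by (simp add: power_add numeral_eq_Suc)
  have "8 * (q / of_real (rpre a k) * (Q / of_real (ftrunc k (a^2)))) = 8 * q * Q / (of_real (rpre a k) * of_real (ftrunc k (a^2)))"
    by simp
  also have "\<dots> = 8 * q * Q / (of_real (fact (2*k+2)) * of_real (ftrunc (k+1) (a^2)) / 2^(2*k+2))" unfolding c ..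
  also have "\<dots> = 2 ^ (2*k+5) * q / (of_real (fact (2*k+2)) * of_real (ftrunc (k+1) (a^2))) * Q"
    unfolding p using nz by (simp add: field_simps)
  finally show ?thesis .
qed

lemma coef2:
  assumes "a \<noteq> 0"
  shows "8 * (q / of_real (rpre a k) * (Q / (2 * of_real (ftrunc k (a^2)))))
       = 2 ^ (2*k+4) * q / (of_real (fact (2*k+2)) * of_real (ftrunc (k+1) (a^2))) * (Q :: complex)"
proof -
  note nz = nz_facts[OF assms, of k]
  have c: "of_real (rpre a k) * of_real (ftrunc k (a^2)) = (of_real (fact (2*k+2)) * of_real (ftrunc (k+1) (a^2)) / 2^(2*k+2) :: complex)"
    by (rule coef_gen[OF assms])
  have p: "(2::complex) ^ (2*k+4) = 4 * 2^(2*k+2)" by (simp add: power_add numeral_eq_Suc)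
  have "8 * (q / of_real (rpre a k) * (Q / (2 * of_real (ftrunc k (a^2))))) = 4 * q * Q / (of_real (rpre a k) * of_real (ftrunc k (a^2)))"
    by simp
  also have "\<dots> = 4 * q * Q / (of_real (fact (2*k+2)) * of_real (ftrunc (k+1) (a^2)) / 2^(2*k+2))" unfolding c ..
  also have "\<dots> = 2 ^ (2*k+4) * q / (of_real (fact (2*k+2)) * of_real (ftrunc (k+1) (a^2))) * Q"
    unfolding p using nz by (simp add: field_simps)
  finally show ?thesis .
qed

theorem lemma4p3:
  fixes a :: real and N :: nat and z w :: complex
  assumes "a \<noteq> 0" and "N \<ge> 1" and "z \<noteq> of_real a" and "w \<noteq> of_real a"
  shows "(8 * exp (2 * w * of_real a) / ((z - of_real a)^3 * (w - of_real a)^3)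
           * Dop a (\<lambda>\<zeta>. Ghat a N \<zeta> w) z
         = deriv (\<lambda>\<zeta>. exp (- 2 * \<zeta> * of_real a) *
             (\<Sum>k<N. 2 ^ (2*k+5) * qeven a k w
                 / (of_real (fact (2*k+2)) * of_real (ftrunc (k+1) (a^2)))
                 * (4 * of_real (ftrunc k (a^2)) * of_real (fact (2*k+2))
                       * etrunc (2*k+2) (2 * \<zeta> * of_real a) / (2 * of_real a) ^ (2*k+3)
                    + of_nat (2*k+2) * of_real (ftrunc (k+1) (a^2)) * \<zeta> ^ (2*k+1)
                    - 2 * of_real (ftrunc k (a^2)) * \<zeta> ^ (2*k+3)))) z) \<and>
         (8 * exp (2 * w * of_real a) / ((z - of_real a)^3 * (w - of_real a)^3)
           * Dop a (\<lambda>\<zeta>. Ghat a N w \<zeta>) z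
         = deriv (\<lambda>\<zeta>. exp (- 2 * \<zeta> * of_real a) *
             (\<Sum>k<N. 2 ^ (2*k+4) * qodd a k w
                 / (of_real (fact (2*k+2)) * of_real (ftrunc (k+1) (a^2)))
                 * (8 * of_real (fact (2*k+2)) * of_real a * of_real (etrunc (k+1) (a^2))
                       / (2 * of_real a) ^ (2*k+3) * etrunc (2*k+2) (2 * \<zeta> * of_real a)
                    - 4 * of_real (ftrunc (k+1) (a^2)) * \<zeta> ^ (2*k+2)))) z)"
proof -
  have a0: "a \<noteq> 0" by (rule assms(1))
  have u0: "z - of_real a \<noteq> 0" using assms(3) by simp
  have v0: "w - of_real a \<noteq> 0" using assms(4) by simp
  have ew: "exp (2 * w * of_real a) * exp (- 2 * w * of_real a) = 1"
    by (simp flip: exp_add)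
  have ez: "exp ((-2 * of_real a) * z) = exp (- 2 * z * of_real a)" by (simp add: mult_ac)
  have ex: "\<And>\<zeta>::complex. exp (- 2 * (\<zeta> + w) * of_real a) = exp ((-2 * of_real a) * \<zeta>) * exp (- 2 * w * of_real a)"
    by (simp flip: exp_add add: algebra_simps)
  define P1 where "P1 = (\<Sum>k<N. smult (qeven a k w / of_real (rpre a k)) (pOc a k))"
  have G1: "(\<lambda>\<zeta>. Ghat a N \<zeta> w) = (\<lambda>\<zeta>. ((w - of_real a)^3 * exp (- 2 * w * of_real a)) * (exp ((-2 * of_real a) * \<zeta>) * poly (Uc a * P1) \<zeta>))"
  proof (rule ext)
    fix \<zeta>
    show "Ghat a N \<zeta> w = ((w - of_real a)^3 * exp (- 2 * w * of_real a)) * (exp ((-2 * of_real a) * \<zeta>) * poly (Uc a * P1) \<zeta>)"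
    proof -
      have s: "(\<Sum>k<N. qodd a k \<zeta> * qeven a k w / of_real (rpre a k)) = (\<Sum>k<N. qeven a k w / of_real (rpre a k) * qodd a k \<zeta>)"
        by (rule sum.cong) auto
      show ?thesis
        unfolding Ghat_def ex P1_def poly_mult poly_Uc poly_sum poly_smult poly_pOc power_mult_distrib s
        by (simp only: mult_ac)
    qed
  qed
  have PL1: "poly (Lc a P1) z = (\<Sum>k<N. qeven a k w / of_real (rpre a k) * (poly (QOc a k) z / of_real (ftrunc k (a^2))))"
    unfolding P1_def Lc_sum Lc_smult poly_sum poly_smult poly_LcO[OF a0] ..
  have LHS1: "Dop a (\<lambda>\<zeta>. Ghat a N \<zeta> w) z = ((w - of_real a)^3 * exp (- 2 * w * of_real a)) * exp ((-2 * of_real a) * z) * ((z - of_real a)^3 * poly (Lc a P1) z)"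
    unfolding G1 Dop_ep bracket ..
  define B1 where "B1 = (\<lambda>k. 2 ^ (2*k+5) * qeven a k w / (of_real (fact (2*k+2)) * of_real (ftrunc (k+1) (a^2))) :: complex)"
  have H1: "((\<lambda>\<zeta>. \<Sum>k<N. B1 k * T1 a k \<zeta>) has_field_derivative (\<Sum>k<N. B1 k * T1d a k z)) (at z)"
    by (intro DERIV_sum DERIV_cmult T1_deriv)
  have RHS1: "deriv (\<lambda>\<zeta>. exp (- 2 * \<zeta> * of_real a) * (\<Sum>k<N. B1 k * T1 a k \<zeta>)) z
      = exp (- 2 * z * of_real a) * (\<Sum>k<N. B1 k * poly (QOc a k) z)"
    unfolding deriv_expH[OF H1] T1_eq[OF a0, symmetric]
    by (simp add: sum_distrib_left sum_subtractf algebra_simps)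
  have E1: "(8 * exp (2 * w * of_real a) / ((z - of_real a)^3 * (w - of_real a)^3)
           * Dop a (\<lambda>\<zeta>. Ghat a N \<zeta> w) z) = exp (- 2 * z * of_real a) * (\<Sum>k<N. B1 k * poly (QOc a k) z)"
  proof -
    have "(8 * exp (2 * w * of_real a) / ((z - of_real a)^3 * (w - of_real a)^3)
           * Dop a (\<lambda>\<zeta>. Ghat a N \<zeta> w) z) = exp (- 2 * z * of_real a) * (8 * poly (Lc a P1) z)"
      unfolding LHS1 ez using u0 v0 ew by (simp add: field_simps)
    also have "8 * poly (Lc a P1) z = (\<Sum>k<N. B1 k * poly (QOc a k) z)"
      unfolding PL1 sum_distrib_left B1_def by (rule sum.cong[OF refl]) (rule coef1[OF a0])
    finally show ?thesis .
  qed
  define P2 where "P2 = (\<Sum>k<N. smult (qodd a k w / of_real (rpre a k)) (pEc a k))"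
  have G2: "(\<lambda>\<zeta>. Ghat a N w \<zeta>) = (\<lambda>\<zeta>. ((w - of_real a)^3 * exp (- 2 * w * of_real a)) * (exp ((-2 * of_real a) * \<zeta>) * poly (Uc a * P2) \<zeta>))"
  proof (rule ext)
    fix \<zeta>
    have ex2: "exp (- 2 * (w + \<zeta>) * of_real a) = exp ((-2 * of_real a) * \<zeta>) * exp (- 2 * w * of_real a)"
      by (simp flip: exp_add add: algebra_simps)
    show "Ghat a N w \<zeta> = ((w - of_real a)^3 * exp (- 2 * w * of_real a)) * (exp ((-2 * of_real a) * \<zeta>) * poly (Uc a * P2) \<zeta>)"
    proof -
      have s: "(\<Sum>k<N. qodd a k w * qeven a k \<zeta> / of_real (rpre a k)) = (\<Sum>k<N. qodd a k w / of_real (rpre a k) * qeven a k \<zeta>)"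
        by (rule sum.cong) auto
      show ?thesis
        unfolding Ghat_def ex2 P2_def poly_mult poly_Uc poly_sum poly_smult poly_pEc power_mult_distrib s
        by (simp only: mult_ac)
    qed
  qed
  have PL2: "poly (Lc a P2) z = (\<Sum>k<N. qodd a k w / of_real (rpre a k) * (poly (QEc a k) z / (2 * of_real (ftrunc k (a^2)))))"
    unfolding P2_def Lc_sum Lc_smult poly_sum poly_smult poly_LcE[OF a0] ..
  have LHS2: "Dop a (\<lambda>\<zeta>. Ghat a N w \<zeta>) z = ((w - of_real a)^3 * exp (- 2 * w * of_real a)) * exp ((-2 * of_real a) * z) * ((z - of_real a)^3 * poly (Lc a P2) z)"
    unfolding G2 Dop_ep bracket ..
  define B2 where "B2 = (\<lambda>k. 2 ^ (2*k+4) * qodd a k w / (of_real (fact (2*k+2)) * of_real (ftrunc (k+1) (a^2))) :: complex)"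
  have H2: "((\<lambda>\<zeta>. \<Sum>k<N. B2 k * T2 a k \<zeta>) has_field_derivative (\<Sum>k<N. B2 k * T2d a k z)) (at z)"
    by (intro DERIV_sum DERIV_cmult T2_deriv)
  have RHS2: "deriv (\<lambda>\<zeta>. exp (- 2 * \<zeta> * of_real a) * (\<Sum>k<N. B2 k * T2 a k \<zeta>)) z
      = exp (- 2 * z * of_real a) * (\<Sum>k<N. B2 k * poly (QEc a k) z)"
    unfolding deriv_expH[OF H2] T2_eq[OF a0, symmetric]
    by (simp add: sum_distrib_left sum_subtractf algebra_simps)
  have E2: "(8 * exp (2 * w * of_real a) / ((z - of_real a)^3 * (w - of_real a)^3)
           * Dop a (\<lambda>\<zeta>. Ghat a N w \<zeta>) z) = exp (- 2 * z * of_real a) * (\<Sum>k<N. B2 k * poly (QEc a k) z)"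
  proof -
    have "(8 * exp (2 * w * of_real a) / ((z - of_real a)^3 * (w - of_real a)^3)
           * Dop a (\<lambda>\<zeta>. Ghat a N w \<zeta>) z) = exp (- 2 * z * of_real a) * (8 * poly (Lc a P2) z)"
      unfolding LHS2 ez using u0 v0 ew by (simp add: field_simps)
    also have "8 * poly (Lc a P2) z = (\<Sum>k<N. B2 k * poly (QEc a k) z)"
      unfolding PL2 sum_distrib_left B2_def by (rule sum.cong[OF refl]) (rule coef2[OF a0])
    finally show ?thesis .
  qed
  show ?thesis
    using E1 E2 RHS1[unfolded B1_def T1_def] RHS2[unfolded B2_def T2_def] unfolding B1_def B2_def
    by simp
qed

end
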